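(* For every $\varepsilon>0$ there exists a finite family $\mathcal{S}$ of line segments in the plane whose intersection graph is triangle-free and has the property that every independent set of this intersection graph has size at most $\varepsilon\cdot|\mathcal{S}|$.
   Context: The intersection graph of a finite family of line segments in the plane has one vertex per segment, with two vertices adjacent if and only if the corresponding segments intersect. A graph is triangle-free if it contains no three pairwise adjacent vertices. An independent set is a set of pairwise non-adjacent vertices. *)

theory Defs
  imports "HOL-Analysis.Analysis"
begin

definition is_segment :: "(real^2) set \<Rightarrow> bool" where
  "is_segment s \<longleftrightarrow> (\<exists>a b. a \<noteq> b \<and> s = closed_segment a b)"

definition seg_adj :: "(real^2) set \<Rightarrow> (real^2) set \<Rightarrow> bool" where
  "seg_adj s t \<longleftrightarrow> s \<noteq> t \<and> s \<inter> t \<noteq> {}"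

definition triangle_free_ig :: "(real^2) set set \<Rightarrow> bool" where
  "triangle_free_ig S \<longleftrightarrow>
     \<not> (\<exists>x\<in>S. \<exists>y\<in>S. \<exists>z\<in>S. seg_adj x y \<and> seg_adj y z \<and> seg_adj x z)"

definition independent_ig :: "(real^2) set set \<Rightarrow> (real^2) set set \<Rightarrow> bool" where
  "independent_ig S I \<longleftrightarrow> I \<subseteq> S \<and> (\<forall>x\<in>I. \<forall>y\<in>I. \<not> seg_adj x y)"

end

theory Submission
  imports Defs
begin

type_synonym pt = "real \<times> real"
type_synonym probe = "real \<times> real \<times> real \<times> real"

definition rbox :: "real \<Rightarrow> real \<Rightarrow> real \<Rightarrow> real \<Rightarrow> pt set" where
  "rbox x0 x1 y0 y1 = {p. x0 \<le> fst p \<and> fst p \<le> x1 \<and> y0 \<le> snd p \<and> snd p \<le> y1}"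

lemma seg_pair: "(p::pt) \<in> closed_segment a b \<longleftrightarrow>
  (\<exists>u. 0 \<le> u \<and> u \<le> 1 \<and> fst p = (1-u)* fst a + u* fst b \<and> snd p = (1-u)* snd a + u* snd b)"
  unfolding in_segment by (auto simp: prod_eq_iff)

lemma cc_bounds: "0 \<le> u \<Longrightarrow> u \<le> 1 \<Longrightarrow> x0 \<le> x \<Longrightarrow> x0 \<le> y \<Longrightarrow> x0 \<le> (1-u) * x + u * (y::real)"
proof -
  assume a: "0 \<le> u" "u \<le> 1" "x0 \<le> x" "x0 \<le> y"
  have "(1-u)*x0 \<le> (1-u)*x" using a by (intro mult_left_mono) auto
  moreover have "u*x0 \<le> u*y" using a by (intro mult_left_mono) auto
  ultimately show ?thesis by (simp add: algebra_simps)
qed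

lemma cc_bounds2: "0 \<le> u \<Longrightarrow> u \<le> 1 \<Longrightarrow> x \<le> x1 \<Longrightarrow> y \<le> x1 \<Longrightarrow> (1-u) * x + u * (y::real) \<le> x1"
proof -
  assume a: "0 \<le> u" "u \<le> 1" "x \<le> x1" "y \<le> x1"
  have "(1-u)*x \<le> (1-u)*x1" using a by (intro mult_left_mono) auto
  moreover have "u*y \<le> u*x1" using a by (intro mult_left_mono) auto
  ultimately show ?thesis by (simp add: algebra_simps)
qed

lemma seg_in_rbox: "a \<in> rbox x0 x1 y0 y1 \<Longrightarrow> b \<in> rbox x0 x1 y0 y1 \<Longrightarrow> closed_segment a b \<subseteq> rbox x0 x1 y0 y1"
  unfolding rbox_def by (auto simp: seg_pair intro!: cc_bounds cc_bounds2)


definition aff :: "real \<Rightarrow> real \<Rightarrow> real \<Rightarrow> real \<Rightarrow> pt \<Rightarrow> pt" where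
  "aff a b c d p = (a + b * fst p, c + d * snd p)"

lemma aff_seg: "aff a b c d ` closed_segment p q = closed_segment (aff a b c d p) (aff a b c d q)"
proof
  show "aff a b c d ` closed_segment p q \<subseteq> closed_segment (aff a b c d p) (aff a b c d q)"
  proof
    fix y assume "y \<in> aff a b c d ` closed_segment p q"
    then obtain x where x: "x \<in> closed_segment p q" "y = aff a b c d x" by auto
    then obtain u where u: "0 \<le> u" "u \<le> 1" "fst x = (1-u) * fst p + u * fst q" "snd x = (1-u) * snd p + u * snd q"
      by (auto simp: seg_pair)
    show "y \<in> closed_segment (aff a b c d p) (aff a b c d q)"
      unfolding seg_pair using u(1,2) x(2) by (intro exI[of _ u]) (simp add: aff_def u(3) u(4) algebra_simps)
  qed
next
  show "closed_segment (aff a b c d p) (aff a b c d q) \<subseteq> aff a b c d ` closed_segment p q"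
  proof
    fix y assume "y \<in> closed_segment (aff a b c d p) (aff a b c d q)"
    then obtain u where u: "0 \<le> u" "u \<le> 1" "fst y = (1-u) * fst (aff a b c d p) + u * fst (aff a b c d q)"
       "snd y = (1-u) * snd (aff a b c d p) + u * snd (aff a b c d q)"
      by (auto simp: seg_pair)
    let ?x = "((1-u) * fst p + u * fst q, (1-u) * snd p + u * snd q)"
    have "?x \<in> closed_segment p q" unfolding seg_pair using u by auto
    moreover have "y = aff a b c d ?x" using u by (auto simp: aff_def algebra_simps prod_eq_iff)
    ultimately show "y \<in> aff a b c d ` closed_segment p q" by blast
  qed
qed

lemma aff_inj: "b \<noteq> 0 \<Longrightarrow> d \<noteq> 0 \<Longrightarrow> inj (aff a b c d)"
  by (auto simp: inj_def aff_def prod_eq_iff)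

definition pl :: "probe \<Rightarrow> real" where "pl Z = fst Z"
definition pm :: "probe \<Rightarrow> real" where "pm Z = fst (snd Z)"
definition pc :: "probe \<Rightarrow> real" where "pc Z = fst (snd (snd Z))"
definition pd :: "probe \<Rightarrow> real" where "pd Z = snd (snd (snd Z))"

lemma pdefs[simp]: "pl (a,b,c,d) = a" "pm (a,b,c,d) = b" "pc (a,b,c,d) = c" "pd (a,b,c,d) = d"
  by (auto simp: pl_def pm_def pc_def pd_def)

definition region :: "probe \<Rightarrow> pt set" where "region Z = rbox (pl Z) 1 (pc Z) (pd Z)"

definition hits :: "pt set set \<Rightarrow> probe \<Rightarrow> pt set set" where
  "hits F Z = {s\<in>F. s \<inter> region Z \<noteq> {}}"

definition indep :: "pt set set \<Rightarrow> bool" where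
  "indep I \<longleftrightarrow> (\<forall>s\<in>I. \<forall>t\<in>I. s \<noteq> t \<longrightarrow> s \<inter> t = {})"

definition trifree :: "pt set set \<Rightarrow> bool" where
  "trifree F \<longleftrightarrow> \<not>(\<exists>x\<in>F. \<exists>y\<in>F. \<exists>z\<in>F. x \<noteq> y \<and> y \<noteq> z \<and> x \<noteq> z \<and>
      x \<inter> y \<noteq> {} \<and> y \<inter> z \<noteq> {} \<and> x \<inter> z \<noteq> {})"

definition good :: "pt set set \<Rightarrow> probe set \<Rightarrow> nat \<Rightarrow> nat \<Rightarrow> bool" where
  "good F P k n \<longleftrightarrow> finite F \<and> finite P \<and> P \<noteq> {} \<and>
     (\<forall>s\<in>F. \<exists>a b. a \<noteq> b \<and> s = closed_segment a b) \<and>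
     (\<forall>s\<in>F. s \<subseteq> rbox 0 1 0 1) \<and>
     trifree F \<and>
     (\<forall>Z\<in>P. 0 \<le> pl Z \<and> pl Z < pm Z \<and> pm Z \<le> 1 \<and> 0 \<le> pc Z \<and> pc Z < pd Z \<and> pd Z \<le> 1) \<and>
     (\<forall>Z\<in>P. \<forall>Z'\<in>P. Z \<noteq> Z' \<longrightarrow> pd Z < pc Z' \<or> pd Z' < pc Z) \<and>
     (\<forall>Z\<in>P. \<forall>s\<in>hits F Z. \<forall>y. pc Z \<le> y \<and> y \<le> pd Z \<longrightarrow> (\<exists>x. pm Z \<le> x \<and> x \<le> 1 \<and> (x,y) \<in> s)) \<and>
     (\<forall>Z\<in>P. \<forall>s\<in>hits F Z. \<forall>p\<in>s \<inter> region Z. pm Z \<le> fst p) \<and>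
     (\<forall>Z\<in>P. indep (hits F Z)) \<and>
     2 * card F = (n+2) * k * card P \<and>
     (\<forall>I. I \<subseteq> F \<longrightarrow> indep I \<longrightarrow> card I \<le> k * card {Z\<in>P. hits F Z \<inter> I \<noteq> {}})"

lemma base: assumes "0 < k" shows "\<exists>F P. good F P k 0"
proof -
  define xs where "xs j = 1/2 + real j / (4 * real k)" for j :: nat
  define sg where "sg j = closed_segment (xs j, 0::real) (xs j, 1)" for j
  define F where "F = sg ` {..<k}"
  define Z :: probe where "Z = (0, 1/4, 0, 1)"
  have xs_b: "1/2 \<le> xs j \<and> xs j < 3/4" if "j < k" for j
  proof -
    have "real j / (4 * real k) < 1/4" using that assms by (simp add: field_simps)
    moreover have "0 \<le> real j / (4 * real k)" by simp
    ultimately show ?thesis unfolding xs_def by linarith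
  qed
  have xs_inj: "xs i = xs j \<Longrightarrow> i = j" for i j using assms by (auto simp: xs_def field_simps)
  have sg_mem: "(p::pt) \<in> sg j \<longleftrightarrow> fst p = xs j \<and> 0 \<le> snd p \<and> snd p \<le> 1" for p j
    unfolding sg_def seg_pair by (auto simp: algebra_simps intro: exI[of _ "snd p"])
  have disj: "sg i \<inter> sg j = {}" if "i \<noteq> j" for i j using xs_inj that by (auto simp: sg_mem)
  have ne: "(xs j, 0) \<in> sg j" for j by (simp add: sg_mem)
  have sg_inj: "inj_on sg {..<k}"
    by (metis disj disjoint_iff inj_onI ne)
  have cardF: "card F = k" unfolding F_def using sg_inj by (simp add: card_image)
  have hitsF: "hits F Z = F"
  proof -
    have "sg j \<inter> region Z \<noteq> {}" if "j < k" for j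
    proof -
      have "(xs j, 0) \<in> region Z" using xs_b[OF that] by (simp add: region_def rbox_def Z_def)
      then show ?thesis using ne by blast
    qed
    then show ?thesis unfolding hits_def F_def by auto
  qed
  have indF: "indep F" unfolding indep_def F_def using disj by (metis image_iff)
  have "good F {Z} k 0"
    unfolding good_def
  proof (intro conjI)
    show "finite F" by (simp add: F_def)
    show "\<forall>s\<in>F. \<exists>a b. a \<noteq> b \<and> s = closed_segment a b"
    proof
      fix s assume "s \<in> F"
      then obtain j where j: "s = sg j" by (auto simp: F_def)
      have "(xs j, 0::real) \<noteq> (xs j, 1)" by simp
      then show "\<exists>a b. a \<noteq> b \<and> s = closed_segment a b" unfolding j sg_def by blast
    qed
    show "\<forall>s\<in>F. s \<subseteq> rbox 0 1 0 1" 
    proof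
      fix s assume "s \<in> F"
      then obtain j where j: "j < k" "s = sg j" by (auto simp: F_def)
      show "s \<subseteq> rbox 0 1 0 1" using xs_b[OF j(1)] j(2) by (auto simp: sg_mem rbox_def)
    qed
    show "trifree F" using indF unfolding trifree_def indep_def by blast
    show "\<forall>Za\<in>{Z}. \<forall>s\<in>hits F Za. \<forall>y. pc Za \<le> y \<and> y \<le> pd Za \<longrightarrow> (\<exists>x. pm Za \<le> x \<and> x \<le> 1 \<and> (x, y) \<in> s)"
    proof (intro ballI allI impI)
      fix Za s y assume a: "Za \<in> {Z}" "s \<in> hits F Za" "pc Za \<le> y \<and> y \<le> pd Za"
      then obtain j where j: "j < k" "s = sg j" using hitsF by (auto simp: F_def)
      show "\<exists>x. pm Za \<le> x \<and> x \<le> 1 \<and> (x, y) \<in> s"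
        using xs_b[OF j(1)] a j(2) by (intro exI[of _ "xs j"]) (auto simp: Z_def sg_mem)
    qed
    show "\<forall>Za\<in>{Z}. \<forall>s\<in>hits F Za. \<forall>p\<in>s \<inter> region Za. pm Za \<le> fst p"
    proof (intro ballI)
      fix Za s p assume a: "Za \<in> {Z}" "s \<in> hits F Za" "p \<in> s \<inter> region Za"
      then obtain j where j: "j < k" "s = sg j" using hitsF by (auto simp: F_def)
      show "pm Za \<le> fst p" using xs_b[OF j(1)] a j(2) by (auto simp: Z_def sg_mem)
    qed
    show "\<forall>Za\<in>{Z}. indep (hits F Za)" using indF hitsF by simp
    show "2 * card F = (0 + 2) * k * card {Z}" using cardF by simp
    show "\<forall>I. I \<subseteq> F \<longrightarrow> indep I \<longrightarrow> card I \<le> k * card {Za \<in> {Z}. hits F Za \<inter> I \<noteq> {}}"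
    proof (intro allI impI)
      fix I assume I: "I \<subseteq> F" "indep I"
      have "card I \<le> k" using I cardF by (metis card_mono \<open>finite F\<close>)
      moreover have "I = {} \<or> {Za \<in> {Z}. hits F Za \<inter> I \<noteq> {}} = {Z}" using I hitsF by auto
      ultimately show "card I \<le> k * card {Za \<in> {Z}. hits F Za \<inter> I \<noteq> {}}" by auto
    qed
  qed (auto simp: Z_def)
  then show ?thesis by blast
qed


definition wR :: "probe \<Rightarrow> real" where "wR R = (pm R - pl R) / 4"
definition HR :: "probe \<Rightarrow> real" where "HR R = pd R - pc R"
definition TR :: "probe \<Rightarrow> pt \<Rightarrow> pt" where "TR R = aff (pl R) (wR R) (pc R) (HR R)"
definition cpy :: "probe \<Rightarrow> pt set set \<Rightarrow> pt set set" where "cpy R G = (\<lambda>s. TR R ` s) ` G"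
definition qlx :: "probe \<Rightarrow> probe \<Rightarrow> real" where "qlx R Q = pl R + wR R * pl Q"
definition qmx :: "probe \<Rightarrow> probe \<Rightarrow> real" where "qmx R Q = pl R + wR R * pm Q"
definition qcy :: "probe \<Rightarrow> probe \<Rightarrow> real" where "qcy R Q = pc R + HR R * pc Q"
definition qdy :: "probe \<Rightarrow> probe \<Rightarrow> real" where "qdy R Q = pc R + HR R * pd Q"
definition hh :: "probe \<Rightarrow> probe \<Rightarrow> real" where "hh R Q = qdy R Q - qcy R Q"
definition y2 :: "nat \<Rightarrow> probe \<Rightarrow> probe \<Rightarrow> nat \<Rightarrow> real" where
  "y2 k R Q j = qcy R Q + hh R Q / 8 + real j * hh R Q / (48 * real k)"
definition y1 :: "nat \<Rightarrow> probe \<Rightarrow> probe \<Rightarrow> nat \<Rightarrow> real" where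
  "y1 k R Q j = y2 k R Q j + hh R Q / 4"
definition x2 :: "probe \<Rightarrow> real" where "x2 R = pl R + 3 * wR R"
definition sg :: "nat \<Rightarrow> probe \<Rightarrow> probe \<Rightarrow> nat \<Rightarrow> pt set" where
  "sg k R Q j = closed_segment (qlx R Q, y1 k R Q j) (x2 R, y2 k R Q j)"
definition SS :: "nat \<Rightarrow> probe \<Rightarrow> probe \<Rightarrow> pt set set" where "SS k R Q = sg k R Q ` {..<k}"
definition P1 :: "probe \<Rightarrow> probe \<Rightarrow> probe" where
  "P1 R Q = (qlx R Q, qmx R Q, qcy R Q + hh R Q / 2, qdy R Q)"
definition P2 :: "probe \<Rightarrow> probe \<Rightarrow> probe" where
  "P2 R Q = (pl R + 2 * wR R, pl R + 5/2 * wR R, qcy R Q + hh R Q / 8 + hh R Q / 48, qcy R Q + hh R Q / 8 + hh R Q / 24)"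
definition newF :: "pt set set \<Rightarrow> probe set \<Rightarrow> pt set set \<Rightarrow> probe set \<Rightarrow> nat \<Rightarrow> pt set set" where
  "newF F0 P0 F P k = F0 \<union> (\<Union>R\<in>P0. cpy R F) \<union> (\<Union>x\<in>P0 \<times> P. SS k (fst x) (snd x))"
definition newP :: "probe set \<Rightarrow> probe set \<Rightarrow> probe set" where
  "newP P0 P = (\<lambda>x. P1 (fst x) (snd x)) ` (P0 \<times> P) \<union> (\<lambda>x. P2 (fst x) (snd x)) ` (P0 \<times> P)"

locale step =
  fixes F0 :: "pt set set" and P0 :: "probe set" and F :: "pt set set" and P :: "probe set"
    and k n :: nat
  assumes g0: "good F0 P0 (card P * k) n" and g: "good F P k n" and kpos: "0 < k"
begin

lemma P0b: "R \<in> P0 \<Longrightarrow> 0 \<le> pl R \<and> pl R < pm R \<and> pm R \<le> 1 \<and> 0 \<le> pc R \<and> pc R < pd R \<and> pd R \<le> 1"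
  using g0 by (simp add: good_def)
lemma Pb: "Q \<in> P \<Longrightarrow> 0 \<le> pl Q \<and> pl Q < pm Q \<and> pm Q \<le> 1 \<and> 0 \<le> pc Q \<and> pc Q < pd Q \<and> pd Q \<le> 1"
  using g by (simp add: good_def)
lemma P0dis: "R \<in> P0 \<Longrightarrow> R' \<in> P0 \<Longrightarrow> R \<noteq> R' \<Longrightarrow> pd R < pc R' \<or> pd R' < pc R"
  using g0 by (simp add: good_def)
lemma Pdis: "Q \<in> P \<Longrightarrow> Q' \<in> P \<Longrightarrow> Q \<noteq> Q' \<Longrightarrow> pd Q < pc Q' \<or> pd Q' < pc Q"
  using g by (simp add: good_def)
lemma F0seg: "s \<in> F0 \<Longrightarrow> \<exists>a b. a \<noteq> b \<and> s = closed_segment a b"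
  using g0 by (simp add: good_def)
lemma Fseg: "s \<in> F \<Longrightarrow> \<exists>a b. a \<noteq> b \<and> s = closed_segment a b"
  using g by (simp add: good_def)
lemma F0box: "s \<in> F0 \<Longrightarrow> s \<subseteq> rbox 0 1 0 1"
  using g0 by (simp add: good_def)
lemma Fbox: "s \<in> F \<Longrightarrow> s \<subseteq> rbox 0 1 0 1"
  using g by (simp add: good_def)
lemma F0cross: "R \<in> P0 \<Longrightarrow> s \<in> hits F0 R \<Longrightarrow> pc R \<le> y \<Longrightarrow> y \<le> pd R \<Longrightarrow> \<exists>x. pm R \<le> x \<and> x \<le> 1 \<and> (x,y) \<in> s"
  using g0 unfolding good_def by blast
lemma Fcross: "Q \<in> P \<Longrightarrow> s \<in> hits F Q \<Longrightarrow> pc Q \<le> y \<Longrightarrow> y \<le> pd Q \<Longrightarrow> \<exists>x. pm Q \<le> x \<and> x \<le> 1 \<and> (x,y) \<in> s"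
  using g unfolding good_def by blast
lemma F0free: "R \<in> P0 \<Longrightarrow> s \<in> hits F0 R \<Longrightarrow> p \<in> s \<Longrightarrow> p \<in> region R \<Longrightarrow> pm R \<le> fst p"
  using g0 unfolding good_def by blast
lemma Ffree: "Q \<in> P \<Longrightarrow> s \<in> hits F Q \<Longrightarrow> p \<in> s \<Longrightarrow> p \<in> region Q \<Longrightarrow> pm Q \<le> fst p"
  using g unfolding good_def by blast
lemma F0ind: "R \<in> P0 \<Longrightarrow> indep (hits F0 R)"
  using g0 unfolding good_def by blast
lemma Find: "Q \<in> P \<Longrightarrow> indep (hits F Q)"
  using g unfolding good_def by blast
lemma F0tri: "trifree F0" using g0 by (simp add: good_def)
lemma Ftri: "trifree F" using g by (simp add: good_def)
lemma fin: "finite F0" "finite P0" "finite F" "finite P" "P0 \<noteq> {}" "P \<noteq> {}"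
  using g0 g by (simp_all add: good_def)
lemma F0card: "2 * card F0 = (n+2) * (card P * k) * card P0" using g0 by (simp add: good_def)
lemma Fcard: "2 * card F = (n+2) * k * card P" using g by (simp add: good_def)
lemma F0I: "I \<subseteq> F0 \<Longrightarrow> indep I \<Longrightarrow> card I \<le> (card P * k) * card {Z\<in>P0. hits F0 Z \<inter> I \<noteq> {}}"
  using g0 unfolding good_def by blast
lemma FI: "I \<subseteq> F \<Longrightarrow> indep I \<Longrightarrow> card I \<le> k * card {Z\<in>P. hits F Z \<inter> I \<noteq> {}}"
  using g unfolding good_def by blast

lemma wpos: "R \<in> P0 \<Longrightarrow> 0 < wR R" using P0b[of R] by (simp add: wR_def)
lemma Hpos: "R \<in> P0 \<Longrightarrow> 0 < HR R" using P0b[of R] by (simp add: HR_def)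
lemma pmR: "pm R = pl R + 4 * wR R" by (simp add: wR_def field_simps)
lemma pdR: "pd R = pc R + HR R" by (simp add: HR_def)

lemma nq: assumes R: "R \<in> P0" and Q: "Q \<in> P"
  shows "pl R \<le> qlx R Q" "qlx R Q < qmx R Q" "qmx R Q \<le> pl R + wR R"
    "pc R \<le> qcy R Q" "qcy R Q < qdy R Q" "qdy R Q \<le> pd R" "0 < hh R Q"
proof -
  have w: "0 < wR R" and H: "0 < HR R" using wpos[OF R] Hpos[OF R] .
  note q = Pb[OF Q]
  have a1: "0 \<le> wR R * pl Q" using w q by simp
  have a2: "wR R * pl Q < wR R * pm Q" using w q by simp
  have a3: "wR R * pm Q \<le> wR R" using w q mult_left_mono[of "pm Q" 1 "wR R"] by simp
  have b1: "0 \<le> HR R * pc Q" using H q by simp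
  have b2: "HR R * pc Q < HR R * pd Q" using H q by simp
  have b3: "HR R * pd Q \<le> HR R" using H q mult_left_mono[of "pd Q" 1 "HR R"] by simp
  show "pl R \<le> qlx R Q" "qlx R Q < qmx R Q" "qmx R Q \<le> pl R + wR R"
    "pc R \<le> qcy R Q" "qcy R Q < qdy R Q" "qdy R Q \<le> pd R" "0 < hh R Q"
    using a1 a2 a3 b1 b2 b3 pdR[of R] by (auto simp: qlx_def qmx_def qcy_def qdy_def hh_def)
qed

lemma strip_dis: assumes "R \<in> P0" "R' \<in> P0" "Q \<in> P" "Q' \<in> P" "(R,Q) \<noteq> (R',Q')"
  shows "qdy R Q < qcy R' Q' \<or> qdy R' Q' < qcy R Q"
proof (cases "R = R'")
  case True
  then have "Q \<noteq> Q'" using assms by auto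
  then have "pd Q < pc Q' \<or> pd Q' < pc Q" using Pdis assms by auto
  moreover have "0 < HR R" using Hpos assms by auto
  ultimately show ?thesis using True by (auto simp: qcy_def qdy_def)
next
  case False
  then have "pd R < pc R' \<or> pd R' < pc R" using P0dis assms by auto
  then show ?thesis using nq[OF assms(1,3)] nq[OF assms(2,4)] by auto
qed

lemma jb: assumes "j < k" "R \<in> P0" "Q \<in> P"
  shows "0 \<le> real j * hh R Q / (48 * real k)" "real j * hh R Q / (48 * real k) < hh R Q / 48"
proof -
  have h: "0 < hh R Q" using nq assms by auto
  show "0 \<le> real j * hh R Q / (48 * real k)" using h by simp
  have "real j * hh R Q < real k * hh R Q" using h assms by simp
  then show "real j * hh R Q / (48 * real k) < hh R Q / 48" using kpos by (simp add: field_simps)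
qed

lemma yb: assumes "j < k" "R \<in> P0" "Q \<in> P"
  shows "qcy R Q + hh R Q / 8 \<le> y2 k R Q j" "y2 k R Q j < qcy R Q + hh R Q / 8 + hh R Q / 48"
    "y1 k R Q j = y2 k R Q j + hh R Q / 4"
  using jb[OF assms] unfolding y2_def y1_def by auto

lemma TR_rbox: assumes "R \<in> P0"
  shows "TR R q \<in> rbox (pl R + wR R * a) (pl R + wR R * b) (pc R + HR R * c) (pc R + HR R * d) \<longleftrightarrow> q \<in> rbox a b c d"
  using wpos[OF assms] Hpos[OF assms] by (simp add: TR_def aff_def rbox_def)

lemma TR_rbox1: assumes "R \<in> P0" "q \<in> rbox 0 1 0 1"
  shows "TR R q \<in> rbox (pl R) (pl R + wR R) (pc R) (pd R)"
  using TR_rbox[OF assms(1), of q 0 1 0 1] assms(2) pdR[of R] by simp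

lemma TR_reg: assumes "R \<in> P0" "Q \<in> P"
  shows "TR R q \<in> rbox (qlx R Q) (pl R + wR R) (qcy R Q) (qdy R Q) \<longleftrightarrow> q \<in> region Q"
  using TR_rbox[OF assms(1), of q "pl Q" 1 "pc Q" "pd Q"] by (simp add: region_def qlx_def qcy_def qdy_def)

lemma loc_cpy: assumes "R \<in> P0" "s \<in> cpy R F" "p \<in> s"
  shows "pl R \<le> fst p" "fst p \<le> pl R + wR R" "pc R \<le> snd p" "snd p \<le> pd R"
proof -
  obtain t where t: "t \<in> F" "s = TR R ` t" using assms by (auto simp: cpy_def)
  then obtain q where q: "q \<in> t" "p = TR R q" using assms by auto
  have "q \<in> rbox 0 1 0 1" using Fbox t q by auto
  then show "pl R \<le> fst p" "fst p \<le> pl R + wR R" "pc R \<le> snd p" "snd p \<le> pd R"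
    using TR_rbox1[OF assms(1)] q by (auto simp: rbox_def)
qed

lemma loc_SS: assumes "R \<in> P0" "Q \<in> P" "s \<in> SS k R Q" "p \<in> s"
  shows "qlx R Q \<le> fst p" "fst p \<le> x2 R" "qcy R Q + hh R Q / 8 \<le> snd p" "snd p \<le> qcy R Q + hh R Q * (20/48)"
proof -
  obtain j where j: "j < k" "s = sg k R Q j" using assms by (auto simp: SS_def)
  note J = jb[OF j(1) assms(1,2)]
  note N = nq[OF assms(1,2)]
  have w: "0 < wR R" using wpos assms by auto
  have "s \<subseteq> rbox (qlx R Q) (x2 R) (qcy R Q + hh R Q / 8) (qcy R Q + hh R Q * (20/48))"
    unfolding j(2) sg_def
  proof (rule seg_in_rbox)
    have e1: "y1 k R Q j = y2 k R Q j + hh R Q / 4" by (simp add: y1_def)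
    have e2: "y2 k R Q j = qcy R Q + hh R Q / 8 + real j * hh R Q / (48 * real k)" by (simp add: y2_def)
    have e3: "x2 R = pl R + 3 * wR R" by (simp add: x2_def)
    show "(qlx R Q, y1 k R Q j) \<in> rbox (qlx R Q) (x2 R) (qcy R Q + hh R Q / 8) (qcy R Q + hh R Q * (20 / 48))"
      unfolding rbox_def mem_Collect_eq fst_conv snd_conv using e1 e2 e3 J N w by linarith
    show "(x2 R, y2 k R Q j) \<in> rbox (qlx R Q) (x2 R) (qcy R Q + hh R Q / 8) (qcy R Q + hh R Q * (20 / 48))"
      unfolding rbox_def mem_Collect_eq fst_conv snd_conv using e1 e2 e3 J N w by linarith
  qed
  then show "qlx R Q \<le> fst p" "fst p \<le> x2 R" "qcy R Q + hh R Q / 8 \<le> snd p" "snd p \<le> qcy R Q + hh R Q * (20/48)"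
    using assms(4) by (auto simp: rbox_def)
qed

end

lemma cross_pt:
  fixes x1 x2 Xu Xv Y1 Y2 :: real
  assumes "x1 < Xu" "Xv < x2"
  shows "\<exists>p. p \<in> closed_segment (Xu,Y1) (Xv,Y2) \<and> p \<in> closed_segment (x1,Y1) (x2,Y2)"
proof -
  define A where "A = Xu - x1"
  define B where "B = x2 - Xv"
  have A: "0 < A" and B: "0 < B" using assms by (auto simp: A_def B_def)
  define t where "t = A / (A + B)"
  have t0: "0 \<le> t" and t1: "t \<le> 1" using A B by (auto simp: t_def field_simps)
  define p where "p = ((1-t) * Xu + t * Xv, (1-t) * Y1 + t * Y2)"
  have key: "(1-t) * Xu + t * Xv = (1-t) * x1 + t * x2"
  proof -
    have "(1-t) * A = t * B" using A B by (simp add: t_def field_simps)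
    then show ?thesis by (simp add: A_def B_def algebra_simps)
  qed
  have "p \<in> closed_segment (Xu,Y1) (Xv,Y2)" unfolding seg_pair p_def using t0 t1 by auto
  moreover have "p \<in> closed_segment (x1,Y1) (x2,Y2)" unfolding seg_pair p_def using t0 t1 key
    by (intro exI[of _ t]) auto
  ultimately show ?thesis by blast
qed

context step begin

lemma seg_ne: "\<exists>a b. a \<noteq> b \<and> s = closed_segment a b \<Longrightarrow> s \<noteq> {}" by auto

lemma wle: "R \<in> P0 \<Longrightarrow> pl R + 4 * wR R \<le> 1" using P0b[of R] pmR[of R] by simp

lemma D1: assumes "R \<in> P0" "s \<in> F0" "t \<in> cpy R F" shows "s \<inter> t = {}"
proof (rule ccontr)
  assume "s \<inter> t \<noteq> {}"
  then obtain p where p: "p \<in> s" "p \<in> t" by auto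
  note L = loc_cpy[OF assms(1,3) p(2)]
  have w: "0 < wR R" using wpos assms by auto
  have "p \<in> region R" using L wle[OF assms(1)] w by (auto simp: region_def rbox_def)
  then have "s \<in> hits F0 R" using p assms by (auto simp: hits_def)
  then have "pm R \<le> fst p" using F0free assms p \<open>p \<in> region R\<close> by blast
  then show False using L w pmR[of R] by linarith
qed

lemma D2: assumes "R \<in> P0" "Q \<in> P" "s \<in> F0" "t \<in> SS k R Q" shows "s \<inter> t = {}"
proof (rule ccontr)
  assume "s \<inter> t \<noteq> {}"
  then obtain p where p: "p \<in> s" "p \<in> t" by auto
  note L = loc_SS[OF assms(1,2,4) p(2)]
  note N = nq[OF assms(1,2)]
  have w: "0 < wR R" using wpos assms by auto
  have "p \<in> region R" unfolding region_def rbox_def mem_Collect_eq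
    using L N wle[OF assms(1)] w x2_def[of R] hh_def[of R Q] by linarith
  then have "s \<in> hits F0 R" using p assms by (auto simp: hits_def)
  then have "pm R \<le> fst p" using F0free assms p \<open>p \<in> region R\<close> by blast
  then show False using L w pmR[of R] x2_def[of R] by linarith
qed

lemma D3: assumes "R \<in> P0" "R' \<in> P0" "R \<noteq> R'" "t \<in> cpy R F" "t' \<in> cpy R' F" shows "t \<inter> t' = {}"
proof (rule ccontr)
  assume "t \<inter> t' \<noteq> {}"
  then obtain p where p: "p \<in> t" "p \<in> t'" by auto
  note L = loc_cpy[OF assms(1,4) p(1)] loc_cpy[OF assms(2,5) p(2)]
  show False using P0dis[OF assms(1-3)] L by linarith
qed

lemma D4: assumes "R \<in> P0" "R' \<in> P0" "Q \<in> P" "R \<noteq> R'" "t \<in> cpy R' F" "s \<in> SS k R Q" shows "t \<inter> s = {}"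
proof (rule ccontr)
  assume "t \<inter> s \<noteq> {}"
  then obtain p where p: "p \<in> t" "p \<in> s" by auto
  note L = loc_cpy[OF assms(2,5) p(1)] loc_SS[OF assms(1,3,6) p(2)]
  note N = nq[OF assms(1,3)]
  have "pc R \<le> snd p" "snd p \<le> pd R" using L(7,8) N(4,5,6,7) hh_def[of R Q] by linarith+
  then show False using P0dis[OF assms(1,2,4)] L(3,4) by linarith
qed

lemma D4': assumes "R \<in> P0" "Q \<in> P" "t0 \<in> F" "s \<in> SS k R Q" "TR R ` t0 \<inter> s \<noteq> {}"
  shows "t0 \<in> hits F Q"
proof -
  obtain q where q: "q \<in> t0" "TR R q \<in> s" using assms(5) by auto
  have c: "TR R ` t0 \<in> cpy R F" using assms(3) by (auto simp: cpy_def)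
  note L = loc_cpy[OF assms(1) c imageI[OF q(1)]] loc_SS[OF assms(1,2,4) q(2)]
  note N = nq[OF assms(1,2)]
  have "TR R q \<in> rbox (qlx R Q) (pl R + wR R) (qcy R Q) (qdy R Q)"
    unfolding rbox_def mem_Collect_eq using L q N hh_def[of R Q] by (intro conjI; linarith)
  then have "q \<in> region Q" using TR_reg[OF assms(1,2)] by blast
  then show ?thesis using q assms(3) by (auto simp: hits_def)
qed

lemma D5: assumes "R \<in> P0" "R' \<in> P0" "Q \<in> P" "Q' \<in> P" "(R,Q) \<noteq> (R',Q')"
  "s \<in> SS k R Q" "s' \<in> SS k R' Q'" shows "s \<inter> s' = {}"
proof (rule ccontr)
  assume "s \<inter> s' \<noteq> {}"
  then obtain p where p: "p \<in> s" "p \<in> s'" by auto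
  note L = loc_SS[OF assms(1,3,6) p(1)] loc_SS[OF assms(2,4,7) p(2)]
  note N = nq[OF assms(1,3)] nq[OF assms(2,4)]
  have "qcy R Q \<le> snd p" "snd p \<le> qdy R Q" using L(3,4) N(5,7) hh_def[of R Q] by linarith+
  moreover have "qcy R' Q' \<le> snd p" "snd p \<le> qdy R' Q'" using L(7,8) N(12,14) hh_def[of R' Q'] by linarith+
  ultimately show False using strip_dis[OF assms(1-5)] by linarith
qed

lemma D6: assumes "R \<in> P0" "Q \<in> P" "j < k" "j' < k" "j \<noteq> j'"
  shows "sg k R Q j \<inter> sg k R Q j' = {}"
proof (rule ccontr)
  assume "sg k R Q j \<inter> sg k R Q j' \<noteq> {}"
  then obtain p where p: "p \<in> sg k R Q j" "p \<in> sg k R Q j'" by auto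
  obtain u where u: "fst p = (1-u) * qlx R Q + u * x2 R" "snd p = (1-u) * y1 k R Q j + u * y2 k R Q j"
    using p(1) unfolding sg_def seg_pair by auto
  obtain v where v: "fst p = (1-v) * qlx R Q + v * x2 R" "snd p = (1-v) * y1 k R Q j' + v * y2 k R Q j'"
    using p(2) unfolding sg_def seg_pair by auto
  note N = nq[OF assms(1,2)]
  have w: "0 < wR R" using wpos assms by auto
  have d: "x2 R - qlx R Q \<noteq> 0" using N w by (simp add: x2_def)
  have "(u - v) * (x2 R - qlx R Q) = 0" using u(1) v(1) by (simp add: algebra_simps)
  then have uv: "u = v" using d by simp
  have "y2 k R Q j = y2 k R Q j'" using u(2) v(2) uv by (simp add: y1_def algebra_simps)
  then have "real j * hh R Q = real j' * hh R Q" using kpos by (simp add: y2_def field_simps)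
  then show False using N assms(5) by simp
qed

lemma cross_T: assumes "R \<in> P0" "Q \<in> P" "t0 \<in> hits F Q" "qcy R Q \<le> Y" "Y \<le> qdy R Q"
  shows "\<exists>X. qmx R Q \<le> X \<and> X \<le> pl R + wR R \<and> (X,Y) \<in> TR R ` t0"
proof -
  have H: "0 < HR R" and w: "0 < wR R" using Hpos wpos assms by auto
  define y0 where "y0 = (Y - pc R) / HR R"
  have Y: "Y = pc R + HR R * y0" using H by (simp add: y0_def)
  have "HR R * pc Q \<le> HR R * y0" using assms(4) Y by (simp add: qcy_def)
  then have a: "pc Q \<le> y0" using H by simp
  have "HR R * y0 \<le> HR R * pd Q" using assms(5) Y by (simp add: qdy_def)
  then have b: "y0 \<le> pd Q" using H by simp
  obtain x0 where x0: "pm Q \<le> x0" "x0 \<le> 1" "(x0,y0) \<in> t0" using Fcross[OF assms(2,3) a b] by auto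
  have "TR R (x0,y0) = (pl R + wR R * x0, Y)" using Y by (simp add: TR_def aff_def)
  moreover have "wR R * pm Q \<le> wR R * x0" "wR R * x0 \<le> wR R" using x0 w mult_left_mono[of x0 1 "wR R"] by auto
  ultimately show ?thesis using x0(3) by (intro exI[of _ "pl R + wR R * x0"]) (force simp: qmx_def)
qed

lemma TRseg: assumes "R \<in> P0" "t0 \<in> F" shows "\<exists>a b. a \<noteq> b \<and> TR R ` t0 = closed_segment a b"
proof -
  obtain a b where ab: "a \<noteq> b" "t0 = closed_segment a b" using Fseg assms by blast
  have "wR R \<noteq> 0" "HR R \<noteq> 0" using wpos[OF assms(1)] Hpos[OF assms(1)] by auto
  then have "inj (TR R)" unfolding TR_def by (intro aff_inj)
  then have "TR R a \<noteq> TR R b" using ab by (meson injD)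
  moreover have "TR R ` t0 = closed_segment (TR R a) (TR R b)" using ab by (simp add: TR_def aff_seg)
  ultimately show ?thesis by blast
qed

lemma meetB: assumes "R \<in> P0" "Q \<in> P" "t0 \<in> hits F Q" "j < k"
  shows "TR R ` t0 \<inter> sg k R Q j \<noteq> {}"
proof -
  note N = nq[OF assms(1,2)]
  note J = yb[OF assms(4,1,2)]
  have w: "0 < wR R" using wpos assms by auto
  have r1: "qcy R Q \<le> y1 k R Q j" "y1 k R Q j \<le> qdy R Q" using J N hh_def[of R Q] by linarith+
  have r2: "qcy R Q \<le> y2 k R Q j" "y2 k R Q j \<le> qdy R Q" using J N hh_def[of R Q] by linarith+
  obtain Xu where Xu: "qmx R Q \<le> Xu" "(Xu, y1 k R Q j) \<in> TR R ` t0" using cross_T[OF assms(1-3) r1] by auto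
  obtain Xv where Xv: "Xv \<le> pl R + wR R" "(Xv, y2 k R Q j) \<in> TR R ` t0" using cross_T[OF assms(1-3) r2] by auto
  have "qlx R Q < Xu" using Xu N by linarith
  moreover have "Xv < x2 R" using Xv w by (simp add: x2_def)
  ultimately obtain p where p: "p \<in> closed_segment (Xu, y1 k R Q j) (Xv, y2 k R Q j)"
    "p \<in> closed_segment (qlx R Q, y1 k R Q j) (x2 R, y2 k R Q j)" using cross_pt by blast
  have t0F: "t0 \<in> F" using assms(3) by (simp add: hits_def)
  obtain a b where "TR R ` t0 = closed_segment a b" using TRseg[OF assms(1) t0F] by blast
  then have "convex (TR R ` t0)" by simp
  then have "closed_segment (Xu, y1 k R Q j) (Xv, y2 k R Q j) \<subseteq> TR R ` t0"
    using Xu(2) Xv(2) by (simp add: closed_segment_subset)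
  then show ?thesis using p by (auto simp: sg_def)
qed

lemma sgP2x: assumes "R \<in> P0" "Q \<in> P" "j < k" "p \<in> sg k R Q j"
  "snd p \<le> qcy R Q + hh R Q / 8 + hh R Q / 24"
  shows "pl R + 5/2 * wR R \<le> fst p"
proof -
  obtain u where u: "0 \<le> u" "u \<le> 1" "fst p = (1-u) * qlx R Q + u * x2 R" "snd p = (1-u) * y1 k R Q j + u * y2 k R Q j"
    using assms(4) unfolding sg_def seg_pair by auto
  note N = nq[OF assms(1,2)]
  note J = yb[OF assms(3,1,2)]
  have w: "0 < wR R" using wpos assms by auto
  define a where "a = 1 - u"
  have a0: "0 \<le> a" using u by (simp add: a_def)
  have sp: "snd p = y2 k R Q j + a * (hh R Q / 4)" unfolding u(4) J(3) a_def by (simp add: algebra_simps)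
  have le: "a * (hh R Q / 4) \<le> hh R Q / 24" using sp J(1) assms(5) by linarith
  have a6: "a \<le> 1/6"
  proof (rule ccontr)
    assume "\<not> a \<le> 1/6"
    then have "(1/6) * (hh R Q / 4) < a * (hh R Q / 4)" using N(7) by (intro mult_strict_right_mono) auto
    then show False using le by linarith
  qed
  have c1: "x2 R - qlx R Q \<le> 3 * wR R" "0 \<le> x2 R - qlx R Q" using N(1,2,3) w x2_def[of R] by linarith+
  have m: "a * (x2 R - qlx R Q) \<le> (1/6) * (3 * wR R)"
    by (rule mult_mono) (use a6 c1 in auto)
  have fp: "fst p = x2 R - a * (x2 R - qlx R Q)" unfolding u(3) a_def by (simp add: algebra_simps)
  show ?thesis using fp m x2_def[of R] by linarith
qed

lemma sgP2c: assumes "R \<in> P0" "Q \<in> P" "j < k"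
  "qcy R Q + hh R Q / 8 + hh R Q / 48 \<le> y" "y \<le> qcy R Q + hh R Q / 8 + hh R Q / 24"
  shows "\<exists>x. pl R + 5/2 * wR R \<le> x \<and> x \<le> 1 \<and> (x,y) \<in> sg k R Q j"
proof -
  note N = nq[OF assms(1,2)]
  note J = yb[OF assms(3,1,2)]
  have w: "0 < wR R" using wpos assms by auto
  define a where "a = 4 * (y - y2 k R Q j) / hh R Q"
  have ya: "y = y2 k R Q j + a * (hh R Q / 4)" using N(7) by (simp add: a_def field_simps)
  have "y2 k R Q j \<le> y" using J assms(4) by linarith
  then have a0: "0 \<le> a" using N(7) by (simp add: a_def)
  have "y - y2 k R Q j \<le> hh R Q / 4" using J assms(5) N(7) by linarith
  then have a1: "a \<le> 1" using N(7) by (simp add: a_def field_simps)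
  define x where "x = a * qlx R Q + (1 - a) * x2 R"
  have ey: "y = (1 - (1-a)) * y1 k R Q j + (1-a) * y2 k R Q j" unfolding ya J(3) by (simp add: algebra_simps)
  have ex: "x = (1 - (1-a)) * qlx R Q + (1-a) * x2 R" unfolding x_def by simp
  have mem: "(x,y) \<in> sg k R Q j" unfolding sg_def seg_pair fst_conv snd_conv
    using a0 a1 ey ex by (intro exI[of _ "1 - a"]) simp
  have c1: "qlx R Q \<le> x2 R" using N(1,2,3) w x2_def[of R] by linarith
  have "x \<le> x2 R" unfolding ex using a0 a1 c1 by (intro cc_bounds2) simp_all
  moreover have "x2 R \<le> 1" using wle[OF assms(1)] w x2_def[of R] by linarith
  moreover have "pl R + 5/2 * wR R \<le> x" using sgP2x[OF assms(1-3) mem] assms(5) by (simp only: snd_conv fst_conv)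
  ultimately show ?thesis using mem by (intro exI[of _ x]) simp
qed

end

context step begin

abbreviation NF where "NF \<equiv> newF F0 P0 F P k"
abbreviation NP where "NP \<equiv> newP P0 P"

lemma NF_cases: "s \<in> NF \<longleftrightarrow> s \<in> F0 \<or> (\<exists>R\<in>P0. s \<in> cpy R F) \<or> (\<exists>R\<in>P0. \<exists>Q\<in>P. s \<in> SS k R Q)"
  by (auto simp: newF_def)

lemma regP1: "p \<in> region (P1 R Q) \<longleftrightarrow> qlx R Q \<le> fst p \<and> fst p \<le> 1 \<and> qcy R Q + hh R Q / 2 \<le> snd p \<and> snd p \<le> qdy R Q"
  by (simp add: region_def rbox_def P1_def)
lemma regP2: "p \<in> region (P2 R Q) \<longleftrightarrow> pl R + 2 * wR R \<le> fst p \<and> fst p \<le> 1 \<and>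
   qcy R Q + hh R Q / 8 + hh R Q / 48 \<le> snd p \<and> snd p \<le> qcy R Q + hh R Q / 8 + hh R Q / 24"
  by (simp add: region_def rbox_def P2_def)
lemma regR: "p \<in> region R \<longleftrightarrow> pl R \<le> fst p \<and> fst p \<le> 1 \<and> pc R \<le> snd p \<and> snd p \<le> pd R"
  by (simp add: region_def rbox_def)

lemma cpy_other: assumes "R \<in> P0" "R' \<in> P0" "s \<in> cpy R' F" "p \<in> s" "pc R \<le> snd p" "snd p \<le> pd R"
  shows "R' = R"
proof (rule ccontr)
  assume "R' \<noteq> R"
  then have "pd R < pc R' \<or> pd R' < pc R" using P0dis assms(1,2) by auto
  moreover note loc_cpy[OF assms(2,3,4)]
  ultimately show False using assms(5,6) by linarith
qed

lemma SS_other: assumes "R \<in> P0" "Q \<in> P" "R' \<in> P0" "Q' \<in> P" "s \<in> SS k R' Q'" "p \<in> s"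
  "qcy R Q \<le> snd p" "snd p \<le> qdy R Q"
  shows "R' = R \<and> Q' = Q"
proof (rule ccontr)
  assume "\<not> (R' = R \<and> Q' = Q)"
  then have "(R,Q) \<noteq> (R',Q')" by auto
  then have "qdy R Q < qcy R' Q' \<or> qdy R' Q' < qcy R Q" using strip_dis assms(1-4) by blast
  moreover note L = loc_SS[OF assms(3,4,5,6)]
  moreover note N = nq[OF assms(3,4)]
  ultimately show False using assms(7,8) hh_def[of R' Q'] by linarith
qed

lemma hitsP1: assumes R: "R \<in> P0" and Q: "Q \<in> P"
  shows "hits NF (P1 R Q) = hits F0 R \<union> cpy R (hits F Q)"
proof
  note N = nq[OF R Q]
  have w: "0 < wR R" using wpos R by auto
  have wl: "pl R + 4 * wR R \<le> 1" using wle R by auto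
  show "hits NF (P1 R Q) \<subseteq> hits F0 R \<union> cpy R (hits F Q)"
  proof
    fix s assume "s \<in> hits NF (P1 R Q)"
    then obtain p where s: "s \<in> NF" and p: "p \<in> s" "p \<in> region (P1 R Q)" by (auto simp: hits_def)
    have pr: "qlx R Q \<le> fst p" "fst p \<le> 1" "qcy R Q + hh R Q / 2 \<le> snd p" "snd p \<le> qdy R Q"
      using p(2) regP1 by auto
    consider "s \<in> F0" | R' where "R' \<in> P0" "s \<in> cpy R' F" | R' Q' where "R' \<in> P0" "Q' \<in> P" "s \<in> SS k R' Q'"
      using s NF_cases by blast
    then show "s \<in> hits F0 R \<union> cpy R (hits F Q)"
    proof cases
      case 1
      have "p \<in> region R" unfolding regR using pr N hh_def[of R Q] by (intro conjI; linarith)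
      then show ?thesis using 1 p by (auto simp: hits_def)
    next
      case 2
      have "R' = R" using cpy_other[OF R 2 p(1)] pr N hh_def[of R Q] by linarith
      then obtain t0 where t0: "t0 \<in> F" "s = TR R ` t0" using 2 by (auto simp: cpy_def)
      then obtain q where q: "q \<in> t0" "p = TR R q" using p by auto
      have c: "s \<in> cpy R F" using 2 \<open>R' = R\<close> by simp
      note L = loc_cpy[OF R c p(1)]
      have "TR R q \<in> rbox (qlx R Q) (pl R + wR R) (qcy R Q) (qdy R Q)"
        unfolding rbox_def mem_Collect_eq q(2)[symmetric] using L pr N hh_def[of R Q] by (intro conjI; linarith)
      then have "q \<in> region Q" using TR_reg[OF R Q] by blast
      then have "t0 \<in> hits F Q" using t0 q by (auto simp: hits_def)
      then show ?thesis using t0 by (auto simp: cpy_def)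
    next
      case 3
      have "R' = R \<and> Q' = Q" using SS_other[OF R Q 3 p(1)] pr N hh_def[of R Q] by linarith
      then have "s \<in> SS k R Q" using 3 by simp
      from loc_SS[OF R Q this p(1)] have False using pr N hh_def[of R Q] by linarith
      then show ?thesis ..
    qed
  qed
  show "hits F0 R \<union> cpy R (hits F Q) \<subseteq> hits NF (P1 R Q)"
  proof
    fix s assume s: "s \<in> hits F0 R \<union> cpy R (hits F Q)"
    then consider "s \<in> hits F0 R" | t0 where "t0 \<in> hits F Q" "s = TR R ` t0" by (auto simp: cpy_def)
    then show "s \<in> hits NF (P1 R Q)"
    proof cases
      case 1
      have y: "pc R \<le> qdy R Q" "qdy R Q \<le> pd R" using N by linarith+
      obtain x where x: "pm R \<le> x" "x \<le> 1" "(x, qdy R Q) \<in> s" using F0cross[OF R 1 y] by blast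
      have "(x, qdy R Q) \<in> region (P1 R Q)" unfolding regP1 fst_conv snd_conv
        using x N pmR[of R] w hh_def[of R Q] by (intro conjI; linarith)
      moreover have "s \<in> NF" using 1 by (auto simp: hits_def newF_def)
      ultimately show ?thesis using x(3) by (auto simp: hits_def)
    next
      case 2
      have y: "qcy R Q \<le> qdy R Q" "qdy R Q \<le> qdy R Q" using N by linarith+
      obtain X where X: "qmx R Q \<le> X" "X \<le> pl R + wR R" "(X, qdy R Q) \<in> TR R ` t0"
        using cross_T[OF R Q 2(1) y] by blast
      have "(X, qdy R Q) \<in> region (P1 R Q)" unfolding regP1 fst_conv snd_conv
        using X N wl w hh_def[of R Q] by (intro conjI; linarith)
      moreover have "s \<in> NF" using 2 R by (auto simp: hits_def newF_def cpy_def)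
      ultimately show ?thesis using X(3) 2(2) by (auto simp: hits_def)
    qed
  qed
qed

lemma hitsP2: assumes R: "R \<in> P0" and Q: "Q \<in> P"
  shows "hits NF (P2 R Q) = hits F0 R \<union> SS k R Q"
proof
  note N = nq[OF R Q]
  have w: "0 < wR R" using wpos R by auto
  have wl: "pl R + 4 * wR R \<le> 1" using wle R by auto
  show "hits NF (P2 R Q) \<subseteq> hits F0 R \<union> SS k R Q"
  proof
    fix s assume "s \<in> hits NF (P2 R Q)"
    then obtain p where s: "s \<in> NF" and p: "p \<in> s" "p \<in> region (P2 R Q)" by (auto simp: hits_def)
    have pr: "pl R + 2 * wR R \<le> fst p" "fst p \<le> 1" "qcy R Q + hh R Q / 8 + hh R Q / 48 \<le> snd p"
       "snd p \<le> qcy R Q + hh R Q / 8 + hh R Q / 24"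
      using p(2) regP2 by auto
    consider "s \<in> F0" | R' where "R' \<in> P0" "s \<in> cpy R' F" | R' Q' where "R' \<in> P0" "Q' \<in> P" "s \<in> SS k R' Q'"
      using s NF_cases by blast
    then show "s \<in> hits F0 R \<union> SS k R Q"
    proof cases
      case 1
      have "p \<in> region R" unfolding regR using pr N w hh_def[of R Q] by (intro conjI; linarith)
      then show ?thesis using 1 p by (auto simp: hits_def)
    next
      case 2
      have "R' = R" using cpy_other[OF R 2 p(1)] pr N hh_def[of R Q] by linarith
      then have c: "s \<in> cpy R F" using 2 by simp
      from loc_cpy[OF R c p(1)] have False using pr w by linarith
      then show ?thesis ..
    next
      case 3
      have "R' = R \<and> Q' = Q" using SS_other[OF R Q 3 p(1)] pr N hh_def[of R Q] by linarith
      then show ?thesis using 3 by simp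
    qed
  qed
  show "hits F0 R \<union> SS k R Q \<subseteq> hits NF (P2 R Q)"
  proof
    fix s assume s: "s \<in> hits F0 R \<union> SS k R Q"
    then consider "s \<in> hits F0 R" | j where "j < k" "s = sg k R Q j" by (auto simp: SS_def)
    then show "s \<in> hits NF (P2 R Q)"
    proof cases
      case 1
      have y: "pc R \<le> qcy R Q + hh R Q / 8 + hh R Q / 48" "qcy R Q + hh R Q / 8 + hh R Q / 48 \<le> pd R"
        using N hh_def[of R Q] by linarith+
      obtain x where x: "pm R \<le> x" "x \<le> 1" "(x, qcy R Q + hh R Q / 8 + hh R Q / 48) \<in> s"
        using F0cross[OF R 1 y] by blast
      have "(x, qcy R Q + hh R Q / 8 + hh R Q / 48) \<in> region (P2 R Q)" unfolding regP2 fst_conv snd_conv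
        using x N pmR[of R] w by (intro conjI; linarith)
      moreover have "s \<in> NF" using 1 by (auto simp: hits_def newF_def)
      ultimately show ?thesis using x(3) by (auto simp: hits_def)
    next
      case 2
      have y: "qcy R Q + hh R Q / 8 + hh R Q / 48 \<le> qcy R Q + hh R Q / 8 + hh R Q / 48"
        "qcy R Q + hh R Q / 8 + hh R Q / 48 \<le> qcy R Q + hh R Q / 8 + hh R Q / 24" using N by linarith+
      obtain x where x: "pl R + 5/2 * wR R \<le> x" "x \<le> 1" "(x, qcy R Q + hh R Q / 8 + hh R Q / 48) \<in> sg k R Q j"
        using sgP2c[OF R Q 2(1) y] by blast
      have "(x, qcy R Q + hh R Q / 8 + hh R Q / 48) \<in> region (P2 R Q)" unfolding regP2 fst_conv snd_conv
        using x w N by (intro conjI; linarith)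
      moreover have "s \<in> NF" using 2 R Q by (auto simp: newF_def SS_def)
      ultimately show ?thesis using x(3) 2(2) by (auto simp: hits_def)
    qed
  qed
qed

end

lemma indep_Un: "indep A \<Longrightarrow> indep B \<Longrightarrow> (\<forall>a\<in>A. \<forall>b\<in>B. a \<inter> b = {}) \<Longrightarrow> indep (A \<union> B)"
  unfolding indep_def by (metis Int_commute Un_iff)

context step begin

lemma TRinj: "R \<in> P0 \<Longrightarrow> inj (TR R)"
proof -
  assume R: "R \<in> P0"
  have "wR R \<noteq> 0" "HR R \<noteq> 0" using wpos[OF R] Hpos[OF R] by auto
  then show "inj (TR R)" unfolding TR_def by (intro aff_inj)
qed

lemma indep_cpy: assumes "R \<in> P0" "indep G" shows "indep (cpy R G)"
  unfolding indep_def
proof (intro ballI impI)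
  fix s t assume st: "s \<in> cpy R G" "t \<in> cpy R G" "s \<noteq> t"
  then obtain a b where ab: "a \<in> G" "b \<in> G" "s = TR R ` a" "t = TR R ` b" by (auto simp: cpy_def)
  then have "a \<noteq> b" using st by auto
  then have "a \<inter> b = {}" using assms(2) ab unfolding indep_def by blast
  then show "s \<inter> t = {}" using ab image_Int[OF TRinj[OF assms(1)], of a b] by simp
qed

lemma NP_cases: "Z \<in> NP \<longleftrightarrow> (\<exists>R\<in>P0. \<exists>Q\<in>P. Z = P1 R Q \<or> Z = P2 R Q)"
proof
  assume "Z \<in> NP"
  then consider x where "x \<in> P0 \<times> P" "Z = P1 (fst x) (snd x)" | x where "x \<in> P0 \<times> P" "Z = P2 (fst x) (snd x)"
    unfolding newP_def by blast
  then show "\<exists>R\<in>P0. \<exists>Q\<in>P. Z = P1 R Q \<or> Z = P2 R Q"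
    by cases (metis mem_Times_iff)+
next
  assume "\<exists>R\<in>P0. \<exists>Q\<in>P. Z = P1 R Q \<or> Z = P2 R Q"
  then obtain R Q where RQ: "R \<in> P0" "Q \<in> P" "Z = P1 R Q \<or> Z = P2 R Q" by blast
  then have m: "(R,Q) \<in> P0 \<times> P" by simp
  show "Z \<in> NP" unfolding newP_def
  proof (cases "Z = P1 R Q")
    case True
    then have "Z = (\<lambda>x. P1 (fst x) (snd x)) (R,Q)" by simp
    then show "Z \<in> (\<lambda>x. P1 (fst x) (snd x)) ` (P0 \<times> P) \<union> (\<lambda>x. P2 (fst x) (snd x)) ` (P0 \<times> P)"
      using m by blast
  next
    case False
    then have "Z = (\<lambda>x. P2 (fst x) (snd x)) (R,Q)" using RQ by simp
    then show "Z \<in> (\<lambda>x. P1 (fst x) (snd x)) ` (P0 \<times> P) \<union> (\<lambda>x. P2 (fst x) (snd x)) ` (P0 \<times> P)"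
      using m by blast
  qed
qed

lemma Zint: assumes "R \<in> P0" "Q \<in> P" "Z = P1 R Q \<or> Z = P2 R Q"
  shows "qcy R Q \<le> pc Z" "pd Z \<le> qdy R Q" "pc Z < pd Z"
proof -
  note N = nq[OF assms(1,2)]
  have "(qcy R Q \<le> pc (P1 R Q) \<and> pd (P1 R Q) \<le> qdy R Q \<and> pc (P1 R Q) < pd (P1 R Q)) \<and>
        (qcy R Q \<le> pc (P2 R Q) \<and> pd (P2 R Q) \<le> qdy R Q \<and> pc (P2 R Q) < pd (P2 R Q))"
    unfolding P1_def P2_def pdefs using N hh_def[of R Q] by (intro conjI; linarith)
  then show "qcy R Q \<le> pc Z" "pd Z \<le> qdy R Q" "pc Z < pd Z" using assms(3) by auto
qed

lemma G_par: assumes "Z \<in> NP" shows "0 \<le> pl Z \<and> pl Z < pm Z \<and> pm Z \<le> 1 \<and> 0 \<le> pc Z \<and> pc Z < pd Z \<and> pd Z \<le> 1"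
proof -
  obtain R Q where RQ: "R \<in> P0" "Q \<in> P" "Z = P1 R Q \<or> Z = P2 R Q" using assms NP_cases by blast
  note N = nq[OF RQ(1,2)]
  note B = P0b[OF RQ(1)]
  have w: "0 < wR R" using wpos RQ by auto
  have wl: "pl R + 4 * wR R \<le> 1" using wle RQ by auto
  note I = Zint[OF RQ]
  have "0 \<le> pl Z \<and> pl Z < pm Z \<and> pm Z \<le> 1"
    using RQ(3) N B w wl by (auto simp: P1_def P2_def)
  moreover have "0 \<le> pc Z" "pd Z \<le> 1" using I N B by linarith+
  ultimately show ?thesis using I by blast
qed

lemma G_dis: assumes "Z \<in> NP" "Z' \<in> NP" "Z \<noteq> Z'" shows "pd Z < pc Z' \<or> pd Z' < pc Z"
proof -
  obtain R Q where RQ: "R \<in> P0" "Q \<in> P" "Z = P1 R Q \<or> Z = P2 R Q" using assms NP_cases by blast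
  obtain R' Q' where RQ': "R' \<in> P0" "Q' \<in> P" "Z' = P1 R' Q' \<or> Z' = P2 R' Q'" using assms NP_cases by blast
  note I = Zint[OF RQ] and I' = Zint[OF RQ']
  show ?thesis
  proof (cases "(R,Q) = (R',Q')")
    case True
    then have "R = R'" "Q = Q'" by auto
    note N = nq[OF RQ(1,2)]
    have "pd (P2 R Q) < pc (P1 R Q)" using N by (simp add: P1_def P2_def)
    then show ?thesis using RQ(3) RQ'(3) \<open>R = R'\<close> \<open>Q = Q'\<close> assms(3) by auto
  next
    case False
    then show ?thesis using strip_dis[OF RQ(1) RQ'(1) RQ(2) RQ'(2) False] I I' by linarith
  qed
qed

lemma G_cross: assumes "Z \<in> NP" "s \<in> hits NF Z" "pc Z \<le> y" "y \<le> pd Z"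
  shows "\<exists>x. pm Z \<le> x \<and> x \<le> 1 \<and> (x,y) \<in> s"
proof -
  obtain R Q where RQ: "R \<in> P0" "Q \<in> P" "Z = P1 R Q \<or> Z = P2 R Q" using assms NP_cases by blast
  note N = nq[OF RQ(1,2)]
  have w: "0 < wR R" using wpos RQ by auto
  have wl: "pl R + 4 * wR R \<le> 1" using wle RQ by auto
  note I = Zint[OF RQ]
  have yR: "pc R \<le> y" "y \<le> pd R" using I N assms(3,4) by linarith+
  show ?thesis
  proof (cases "Z = P1 R Q")
    case True
    then have s: "s \<in> hits F0 R \<union> cpy R (hits F Q)" using assms(2) hitsP1[OF RQ(1,2)] by simp
    have pmZ: "pm Z = qmx R Q" using True by (simp add: P1_def)
    show ?thesis
    proof (cases "s \<in> hits F0 R")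
      case True
      obtain x where x: "pm R \<le> x" "x \<le> 1" "(x,y) \<in> s" using F0cross[OF RQ(1) True yR] by blast
      then show ?thesis using pmZ N pmR[of R] w by (intro exI[of _ x]) auto
    next
      case False
      then obtain t0 where t0: "t0 \<in> hits F Q" "s = TR R ` t0" using s by (auto simp: cpy_def)
      have y': "qcy R Q \<le> y" "y \<le> qdy R Q" using I assms(3,4) by linarith+
      obtain X where X: "qmx R Q \<le> X" "X \<le> pl R + wR R" "(X,y) \<in> TR R ` t0" using cross_T[OF RQ(1,2) t0(1) y'] by blast
      then show ?thesis using pmZ t0(2) wl w by (intro exI[of _ X]) auto
    qed
  next
    case False
    then have Z2: "Z = P2 R Q" using RQ(3) by simp
    then have s: "s \<in> hits F0 R \<union> SS k R Q" using assms(2) hitsP2[OF RQ(1,2)] by simp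
    have pmZ: "pm Z = pl R + 5/2 * wR R" using Z2 by (simp add: P2_def)
    show ?thesis
    proof (cases "s \<in> hits F0 R")
      case True
      obtain x where x: "pm R \<le> x" "x \<le> 1" "(x,y) \<in> s" using F0cross[OF RQ(1) True yR] by blast
      then show ?thesis using pmZ pmR[of R] w by (intro exI[of _ x]) auto
    next
      case False
      then obtain j where j: "j < k" "s = sg k R Q j" using s by (auto simp: SS_def)
      have y': "qcy R Q + hh R Q / 8 + hh R Q / 48 \<le> y" "y \<le> qcy R Q + hh R Q / 8 + hh R Q / 24"
        using assms(3,4) Z2 by (auto simp: P2_def)
      show ?thesis using sgP2c[OF RQ(1,2) j(1) y'] pmZ j(2) by auto
    qed
  qed
qed

lemma G_free: assumes "Z \<in> NP" "s \<in> hits NF Z" "p \<in> s" "p \<in> region Z"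
  shows "pm Z \<le> fst p"
proof -
  obtain R Q where RQ: "R \<in> P0" "Q \<in> P" "Z = P1 R Q \<or> Z = P2 R Q" using assms NP_cases by blast
  note N = nq[OF RQ(1,2)]
  have w: "0 < wR R" using wpos RQ by auto
  have wl: "pl R + 4 * wR R \<le> 1" using wle RQ by auto
  show ?thesis
  proof (cases "Z = P1 R Q")
    case True
    then have s: "s \<in> hits F0 R \<union> cpy R (hits F Q)" using assms(2) hitsP1[OF RQ(1,2)] by simp
    have pmZ: "pm Z = qmx R Q" using True by (simp add: P1_def)
    have pr: "qlx R Q \<le> fst p" "fst p \<le> 1" "qcy R Q + hh R Q / 2 \<le> snd p" "snd p \<le> qdy R Q"
      using assms(4) True regP1 by auto
    show ?thesis
    proof (cases "s \<in> hits F0 R")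
      case True
      have "p \<in> region R" unfolding regR using pr N hh_def[of R Q] by (intro conjI; linarith)
      then have "pm R \<le> fst p" using F0free[OF RQ(1) True assms(3)] by blast
      then show ?thesis using pmZ N pmR[of R] w by linarith
    next
      case False
      then obtain t0 where t0: "t0 \<in> hits F Q" "s = TR R ` t0" using s by (auto simp: cpy_def)
      then obtain q where q: "q \<in> t0" "p = TR R q" using assms(3) by auto
      have c: "s \<in> cpy R F" using t0 by (auto simp: cpy_def hits_def)
      note L = loc_cpy[OF RQ(1) c assms(3)]
      have "TR R q \<in> rbox (qlx R Q) (pl R + wR R) (qcy R Q) (qdy R Q)"
        unfolding rbox_def mem_Collect_eq q(2)[symmetric] using L pr N hh_def[of R Q] by (intro conjI; linarith)
      then have "q \<in> region Q" using TR_reg[OF RQ(1,2)] by blast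
      then have "pm Q \<le> fst q" using Ffree[OF RQ(2) t0(1) q(1)] by blast
      then have "wR R * pm Q \<le> wR R * fst q" using w by simp
      moreover have "fst p = pl R + wR R * fst q" using q(2) by (simp add: TR_def aff_def)
      ultimately show ?thesis using pmZ by (simp add: qmx_def)
    qed
  next
    case False
    then have Z2: "Z = P2 R Q" using RQ(3) by simp
    then have s: "s \<in> hits F0 R \<union> SS k R Q" using assms(2) hitsP2[OF RQ(1,2)] by simp
    have pmZ: "pm Z = pl R + 5/2 * wR R" using Z2 by (simp add: P2_def)
    have pr: "pl R + 2 * wR R \<le> fst p" "fst p \<le> 1" "qcy R Q + hh R Q / 8 + hh R Q / 48 \<le> snd p"
       "snd p \<le> qcy R Q + hh R Q / 8 + hh R Q / 24"
      using assms(4) Z2 regP2 by auto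
    show ?thesis
    proof (cases "s \<in> hits F0 R")
      case True
      have "p \<in> region R" unfolding regR using pr N w hh_def[of R Q] by (intro conjI; linarith)
      then have "pm R \<le> fst p" using F0free[OF RQ(1) True assms(3)] by blast
      then show ?thesis using pmZ pmR[of R] w by linarith
    next
      case False
      then obtain j where j: "j < k" "s = sg k R Q j" using s by (auto simp: SS_def)
      show ?thesis using sgP2x[OF RQ(1,2) j(1), of p] j(2) assms(3) pr(4) pmZ by simp
    qed
  qed
qed

lemma G_ind: assumes "Z \<in> NP" shows "indep (hits NF Z)"
proof -
  obtain R Q where RQ: "R \<in> P0" "Q \<in> P" "Z = P1 R Q \<or> Z = P2 R Q" using assms NP_cases by blast
  show ?thesis
  proof (cases "Z = P1 R Q")
    case True
    have "indep (hits F0 R \<union> cpy R (hits F Q))"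
    proof (rule indep_Un)
      show "indep (hits F0 R)" using F0ind RQ by auto
      show "indep (cpy R (hits F Q))" using indep_cpy[OF RQ(1) Find[OF RQ(2)]] .
      show "\<forall>a\<in>hits F0 R. \<forall>b\<in>cpy R (hits F Q). a \<inter> b = {}"
        using D1[OF RQ(1)] by (auto simp: hits_def cpy_def)
    qed
    then show ?thesis using True hitsP1[OF RQ(1,2)] by simp
  next
    case False
    then have Z2: "Z = P2 R Q" using RQ(3) by simp
    have "indep (hits F0 R \<union> SS k R Q)"
    proof (rule indep_Un)
      show "indep (hits F0 R)" using F0ind RQ by auto
      show "indep (SS k R Q)" unfolding indep_def SS_def using D6[OF RQ(1,2)] by blast
      show "\<forall>a\<in>hits F0 R. \<forall>b\<in>SS k R Q. a \<inter> b = {}"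
        using D2[OF RQ(1,2)] by (auto simp: hits_def)
    qed
    then show ?thesis using Z2 hitsP2[OF RQ(1,2)] by simp
  qed
qed

end

lemma fam_disj: "(\<forall>s\<in>X. s \<noteq> {}) \<Longrightarrow> (\<forall>s\<in>X. \<forall>t\<in>Y. s \<inter> t = {}) \<Longrightarrow> X \<inter> Y = {}"
  by blast

lemma card_filter_sum: "finite X \<Longrightarrow> card {x\<in>X. P x} = (\<Sum>x\<in>X. if P x then 1 else (0::nat))"
  unfolding card_eq_sum by (rule sum.inter_filter)

lemma comb3: assumes "finite X" "\<forall>x\<in>X. S x \<longrightarrow> \<not> B x"
  shows "card {x\<in>X. A x} + card {x\<in>X. B x} + card {x\<in>X. S x} \<le> card {x\<in>X. A x \<or> B x} + card {x\<in>X. A x \<or> S x}"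
  unfolding card_filter_sum[OF assms(1)] sum.distrib[symmetric]
  by (rule sum_mono) (use assms(2) in auto)

context step begin

lemma NF_ne: "s \<in> NF \<Longrightarrow> s \<noteq> {}"
proof -
  assume "s \<in> NF"
  then consider "s \<in> F0" | R where "R \<in> P0" "s \<in> cpy R F" | R Q where "R \<in> P0" "Q \<in> P" "s \<in> SS k R Q"
    using NF_cases by blast
  then show "s \<noteq> {}"
  proof cases
    case 1 then show ?thesis using F0seg by blast
  next
    case 2
    then obtain t where t: "t \<in> F" "s = TR R ` t" by (auto simp: cpy_def)
    then obtain a b where "t = closed_segment a b" using Fseg by blast
    then show ?thesis using t by auto
  next
    case 3 then show ?thesis by (auto simp: SS_def sg_def)
  qed
qed

lemma NF_sub: "F0 \<subseteq> NF" "R \<in> P0 \<Longrightarrow> cpy R F \<subseteq> NF" "R \<in> P0 \<Longrightarrow> Q \<in> P \<Longrightarrow> SS k R Q \<subseteq> NF"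
  by (auto simp: newF_def)

lemma E1: assumes "R \<in> P0" shows "F0 \<inter> cpy R F = {}"
proof (rule fam_disj)
  show "\<forall>s\<in>F0. s \<noteq> {}" using NF_ne NF_sub(1) by blast
  show "\<forall>s\<in>F0. \<forall>t\<in>cpy R F. s \<inter> t = {}" using D1[OF assms] by blast
qed
lemma E2: assumes "R \<in> P0" "Q \<in> P" shows "F0 \<inter> SS k R Q = {}"
proof (rule fam_disj)
  show "\<forall>s\<in>F0. s \<noteq> {}" using NF_ne NF_sub(1) by blast
  show "\<forall>s\<in>F0. \<forall>t\<in>SS k R Q. s \<inter> t = {}" using D2[OF assms] by blast
qed
lemma E3: assumes "R \<in> P0" "R' \<in> P0" "R \<noteq> R'" shows "cpy R F \<inter> cpy R' F = {}"
proof (rule fam_disj)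
  show "\<forall>s\<in>cpy R F. s \<noteq> {}" using NF_ne NF_sub(2)[OF assms(1)] by blast
  show "\<forall>s\<in>cpy R F. \<forall>t\<in>cpy R' F. s \<inter> t = {}" using D3[OF assms] by blast
qed
lemma E5: assumes "R \<in> P0" "R' \<in> P0" "Q \<in> P" "Q' \<in> P" "(R,Q) \<noteq> (R',Q')" shows "SS k R Q \<inter> SS k R' Q' = {}"
proof (rule fam_disj)
  show "\<forall>s\<in>SS k R Q. s \<noteq> {}" using NF_ne NF_sub(3)[OF assms(1,3)] by blast
  show "\<forall>s\<in>SS k R Q. \<forall>t\<in>SS k R' Q'. s \<inter> t = {}" using D5[OF assms] by blast
qed
lemma E4: assumes "R \<in> P0" "R' \<in> P0" "Q \<in> P" shows "cpy R' F \<inter> SS k R Q = {}"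
proof (cases "R = R'")
  case False
  show ?thesis
  proof (rule fam_disj)
    show "\<forall>s\<in>cpy R' F. s \<noteq> {}" using NF_ne NF_sub(2)[OF assms(2)] by blast
    show "\<forall>s\<in>cpy R' F. \<forall>t\<in>SS k R Q. s \<inter> t = {}" using D4[OF assms(1,2,3)] False by blast
  qed
next
  case True
  show ?thesis
  proof (rule ccontr)
    assume "cpy R' F \<inter> SS k R Q \<noteq> {}"
    then obtain s where s: "s \<in> cpy R F" "s \<in> SS k R Q" using True by auto
    then obtain j where j: "s = sg k R Q j" by (auto simp: SS_def)
    have "(x2 R, y2 k R Q j) \<in> s" unfolding j sg_def by simp
    from loc_cpy(2)[OF assms(1) s(1) this] have "x2 R \<le> pl R + wR R" by simp
    then show False using wpos[OF assms(1)] by (simp add: x2_def)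
  qed
qed

lemma G_box: "s \<in> NF \<Longrightarrow> s \<subseteq> rbox 0 1 0 1"
proof -
  assume "s \<in> NF"
  then consider "s \<in> F0" | R where "R \<in> P0" "s \<in> cpy R F" | R Q where "R \<in> P0" "Q \<in> P" "s \<in> SS k R Q"
    using NF_cases by blast
  then show "s \<subseteq> rbox 0 1 0 1"
  proof cases
    case 1 then show ?thesis using F0box by blast
  next
    case 2
    show ?thesis
    proof
      fix p assume p: "p \<in> s"
      note L = loc_cpy[OF 2 p]
      have "0 \<le> pl R" "0 \<le> pc R" "pd R \<le> 1" using P0b[OF 2(1)] by auto
      moreover have "pl R + 4 * wR R \<le> 1" "0 < wR R" using wle wpos 2 by auto
      ultimately show "p \<in> rbox 0 1 0 1" unfolding rbox_def mem_Collect_eq using L by (intro conjI; linarith)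
    qed
  next
    case 3
    show ?thesis
    proof
      fix p assume p: "p \<in> s"
      note L = loc_SS[OF 3 p]
      note N = nq[OF 3(1,2)]
      have "0 \<le> pl R" "0 \<le> pc R" "pd R \<le> 1" using P0b[OF 3(1)] by auto
      moreover have "pl R + 4 * wR R \<le> 1" "0 < wR R" using wle wpos 3 by auto
      ultimately show "p \<in> rbox 0 1 0 1" unfolding rbox_def mem_Collect_eq
        using L N x2_def[of R] hh_def[of R Q] by (intro conjI; linarith)
    qed
  qed
qed

lemma G_seg: "s \<in> NF \<Longrightarrow> \<exists>a b. a \<noteq> b \<and> s = closed_segment a b"
proof -
  assume "s \<in> NF"
  then consider "s \<in> F0" | R where "R \<in> P0" "s \<in> cpy R F" | R Q where "R \<in> P0" "Q \<in> P" "s \<in> SS k R Q"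
    using NF_cases by blast
  then show ?thesis
  proof cases
    case 1 then show ?thesis using F0seg by blast
  next
    case 2
    then obtain t where t: "t \<in> F" "s = TR R ` t" unfolding cpy_def by blast
    show ?thesis using TRseg[OF 2(1) t(1)] t(2) by simp
  next
    case 3
    then obtain j where j: "s = sg k R Q j" by (auto simp: SS_def)
    have "qlx R Q < x2 R" using nq[OF 3(1,2)] wpos[OF 3(1)] x2_def[of R] by linarith
    then have "(qlx R Q, y1 k R Q j) \<noteq> (x2 R, y2 k R Q j)" by auto
    then show ?thesis unfolding j sg_def by blast
  qed
qed

lemma card_cpy: "R \<in> P0 \<Longrightarrow> card (cpy R F) = card F"
  unfolding cpy_def by (rule card_image) (auto simp: inj_on_def inj_image_eq_iff[OF TRinj])

lemma card_SS: assumes "R \<in> P0" "Q \<in> P" shows "card (SS k R Q) = k"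
proof -
  have "inj_on (sg k R Q) {..<k}"
  proof (rule inj_onI)
    fix i j assume ij: "i \<in> {..<k}" "j \<in> {..<k}" "sg k R Q i = sg k R Q j"
    show "i = j"
    proof (rule ccontr)
      assume "i \<noteq> j"
      then have "sg k R Q i \<inter> sg k R Q j = {}" using D6[OF assms] ij by auto
      moreover have "sg k R Q i \<noteq> {}" by (auto simp: sg_def)
      ultimately show False using ij(3) by auto
    qed
  qed
  then show ?thesis by (simp add: SS_def card_image)
qed

lemma finSS: "finite (SS k R Q)" by (simp add: SS_def)
lemma fincpy: "finite (cpy R F)" using fin by (simp add: cpy_def)

lemma card_NF: "card NF = card F0 + card P0 * card F + card P0 * card P * k"
proof -
  define A where "A = (\<Union>R\<in>P0. cpy R F)"
  define B where "B = (\<Union>x\<in>P0 \<times> P. SS k (fst x) (snd x))"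
  have NFe: "NF = F0 \<union> A \<union> B" by (simp add: newF_def A_def B_def)
  have cA: "card A = card P0 * card F"
  proof -
    have "card A = (\<Sum>R\<in>P0. card (cpy R F))" unfolding A_def
      using fin fincpy E3 by (intro card_UN_disjoint) auto
    also have "\<dots> = (\<Sum>R\<in>P0. card F)" using card_cpy by simp
    finally show ?thesis by simp
  qed
  have cB: "card B = card P0 * card P * k"
  proof -
    have "card B = (\<Sum>x\<in>P0 \<times> P. card (SS k (fst x) (snd x)))" unfolding B_def
    proof (rule card_UN_disjoint)
      show "finite (P0 \<times> P)" using fin by simp
      show "\<forall>i\<in>P0 \<times> P. finite (SS k (fst i) (snd i))" using finSS by simp
      show "\<forall>i\<in>P0 \<times> P. \<forall>j\<in>P0 \<times> P. i \<noteq> j \<longrightarrow> SS k (fst i) (snd i) \<inter> SS k (fst j) (snd j) = {}"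
        using E5 by (metis mem_Times_iff prod.collapse)
    qed
    also have "\<dots> = (\<Sum>x\<in>P0 \<times> P. k)" using card_SS by (intro sum.cong) auto
    finally show ?thesis using fin by (simp add: card_cartesian_product)
  qed
  have d1: "F0 \<inter> A = {}" unfolding A_def using E1 by blast
  have d2: "(F0 \<union> A) \<inter> B = {}"
  proof (rule equals0I)
    fix s assume "s \<in> (F0 \<union> A) \<inter> B"
    then obtain x where x: "x \<in> P0 \<times> P" "s \<in> SS k (fst x) (snd x)" and s: "s \<in> F0 \<union> A" unfolding B_def by blast
    have x1: "fst x \<in> P0" "snd x \<in> P" using x(1) by (simp_all add: mem_Times_iff)
    show False
    proof (cases "s \<in> F0")
      case True
      then show False using E2[OF x1] x(2) by blast
    next
      case False
      then obtain R where R: "R \<in> P0" "s \<in> cpy R F" using s unfolding A_def by blast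
      then show False using E4[OF x1(1) R(1) x1(2)] x(2) by blast
    qed
  qed
  have fA: "finite A" unfolding A_def using fin fincpy by auto
  have fB: "finite B" unfolding B_def using fin finSS by auto
  have "card NF = card (F0 \<union> A) + card B" unfolding NFe using d2 fin fA fB by (intro card_Un_disjoint) auto
  also have "card (F0 \<union> A) = card F0 + card A" using d1 fin fA by (intro card_Un_disjoint) auto
  finally show ?thesis using cA cB by simp
qed

lemma Zsame: assumes "R \<in> P0" "Q \<in> P" "R' \<in> P0" "Q' \<in> P" "Z = P1 R Q \<or> Z = P2 R Q" "Z = P1 R' Q' \<or> Z = P2 R' Q'"
  shows "R = R' \<and> Q = Q'"
proof (rule ccontr)
  assume "\<not> (R = R' \<and> Q = Q')"
  then have "(R,Q) \<noteq> (R',Q')" by auto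
  from strip_dis[OF assms(1,3,2,4) this] Zint[OF assms(1,2,5)] Zint[OF assms(3,4,6)]
  show False by linarith
qed

lemma P12: assumes "R \<in> P0" "Q \<in> P" shows "P1 R Q \<noteq> P2 R Q"
proof -
  have "pc (P2 R Q) < pc (P1 R Q)" using nq[OF assms] by (simp add: P1_def P2_def)
  then show ?thesis by auto
qed

lemma inj1: "inj_on (\<lambda>x. P1 (fst x) (snd x)) (P0 \<times> P)"
  by (rule inj_onI) (metis Zsame mem_Times_iff prod.collapse)
lemma inj2: "inj_on (\<lambda>x. P2 (fst x) (snd x)) (P0 \<times> P)"
  by (rule inj_onI) (metis Zsame mem_Times_iff prod.collapse)
lemma disj12: "x \<in> P0 \<times> P \<Longrightarrow> y \<in> P0 \<times> P \<Longrightarrow> P1 (fst x) (snd x) \<noteq> P2 (fst y) (snd y)"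
  by (metis Zsame P12 mem_Times_iff prod.collapse)

lemma card_NP: "card NP = 2 * card P0 * card P"
proof -
  have "card NP = card ((\<lambda>x. P1 (fst x) (snd x)) ` (P0 \<times> P)) + card ((\<lambda>x. P2 (fst x) (snd x)) ` (P0 \<times> P))"
    unfolding newP_def
  proof (rule card_Un_disjoint)
    show "finite ((\<lambda>x. P1 (fst x) (snd x)) ` (P0 \<times> P))" "finite ((\<lambda>x. P2 (fst x) (snd x)) ` (P0 \<times> P))"
      using fin by simp_all
    show "(\<lambda>x. P1 (fst x) (snd x)) ` (P0 \<times> P) \<inter> (\<lambda>x. P2 (fst x) (snd x)) ` (P0 \<times> P) = {}"
    proof (rule equals0I)
      fix z assume "z \<in> (\<lambda>x. P1 (fst x) (snd x)) ` (P0 \<times> P) \<inter> (\<lambda>x. P2 (fst x) (snd x)) ` (P0 \<times> P)"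
      then obtain x y where "x \<in> P0 \<times> P" "y \<in> P0 \<times> P" "z = P1 (fst x) (snd x)" "z = P2 (fst y) (snd y)"
        by blast
      then show False using disj12 by metis
    qed
  qed
  also have "\<dots> = card (P0 \<times> P) + card (P0 \<times> P)" using inj1 inj2 by (simp add: card_image)
  finally show ?thesis by (simp add: card_cartesian_product)
qed

lemma G_count: "2 * card NF = (Suc n + 2) * k * card NP"
proof -
  have "2 * card NF = 2 * card F0 + card P0 * (2 * card F) + 2 * (card P0 * card P * k)"
    using card_NF by (simp add: algebra_simps)
  also have "\<dots> = (n+2) * (card P * k) * card P0 + card P0 * ((n+2) * k * card P) + 2 * (card P0 * card P * k)"
    using F0card Fcard by simp
  also have "\<dots> = (Suc n + 2) * k * (2 * card P0 * card P)" by (simp add: algebra_simps)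
  finally show ?thesis using card_NP by simp
qed

end

context step begin

lemma nbrF0: assumes "x \<in> F0" "y \<in> NF" "x \<inter> y \<noteq> {}" shows "y \<in> F0"
proof -
  consider "y \<in> F0" | R where "R \<in> P0" "y \<in> cpy R F" | R Q where "R \<in> P0" "Q \<in> P" "y \<in> SS k R Q"
    using assms(2) NF_cases by blast
  then show ?thesis
  proof cases
    case 1 then show ?thesis .
  next
    case 2 then show ?thesis using D1[OF 2(1) assms(1) 2(2)] assms(3) by blast
  next
    case 3 then show ?thesis using D2[OF 3(1,2) assms(1) 3(3)] assms(3) by blast
  qed
qed

lemma nbrSS: assumes R: "R \<in> P0" and Q: "Q \<in> P" and x: "x \<in> SS k R Q" and "y \<in> NF" "x \<noteq> y" "x \<inter> y \<noteq> {}"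
  shows "y \<in> cpy R (hits F Q)"
proof -
  consider "y \<in> F0" | R' where "R' \<in> P0" "y \<in> cpy R' F" | R' Q' where "R' \<in> P0" "Q' \<in> P" "y \<in> SS k R' Q'"
    using assms(4) NF_cases by blast
  then show ?thesis
  proof cases
    case 1 then show ?thesis using D2[OF R Q 1 x] assms(6) by blast
  next
    case 2
    show ?thesis
    proof (cases "R' = R")
      case False
      then show ?thesis using D4[OF R 2(1) Q _ 2(2) x] assms(6) by blast
    next
      case True
      obtain t0 where t0: "t0 \<in> F" "y = TR R ` t0" using 2 True by (auto simp: cpy_def)
      have "TR R ` t0 \<inter> x \<noteq> {}" using assms(6) t0(2) by blast
      then have "t0 \<in> hits F Q" using D4'[OF R Q t0(1) x] by blast
      then show ?thesis using t0(2) by (simp add: cpy_def)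
    qed
  next
    case 3
    show ?thesis
    proof (cases "(R,Q) = (R',Q')")
      case False
      then show ?thesis using D5[OF R 3(1) Q 3(2) False x 3(3)] assms(6) by blast
    next
      case True
      then have y: "y \<in> SS k R Q" using 3 by simp
      obtain i j where ij: "i < k" "j < k" "x = sg k R Q i" "y = sg k R Q j" using x y by (auto simp: SS_def)
      then have "i \<noteq> j" using assms(5) by auto
      then show ?thesis using D6[OF R Q ij(1,2)] ij(3,4) assms(6) by blast
    qed
  qed
qed

lemma nbrcpy: assumes R: "R \<in> P0" and x: "x \<in> cpy R F" and y: "y \<in> NF" "x \<inter> y \<noteq> {}"
  and noS: "\<not> (\<exists>R'\<in>P0. \<exists>Q'\<in>P. y \<in> SS k R' Q')"
  shows "y \<in> cpy R F"
proof -
  consider "y \<in> F0" | R' where "R' \<in> P0" "y \<in> cpy R' F" | R' Q' where "R' \<in> P0" "Q' \<in> P" "y \<in> SS k R' Q'"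
    using y(1) NF_cases by blast
  then show ?thesis
  proof cases
    case 1 then show ?thesis using D1[OF R 1 x] y(2) by blast
  next
    case 2
    show ?thesis
    proof (cases "R = R'")
      case True then show ?thesis using 2 by simp
    next
      case False then show ?thesis using D3[OF R 2(1) False x 2(2)] y(2) by blast
    qed
  next
    case 3 then show ?thesis using noS by blast
  qed
qed

lemma tri_SS: assumes "x \<in> SS k R Q" "R \<in> P0" "Q \<in> P" "y \<in> NF" "z \<in> NF" "x \<noteq> y" "x \<noteq> z" "y \<noteq> z"
  "x \<inter> y \<noteq> {}" "x \<inter> z \<noteq> {}" "y \<inter> z \<noteq> {}" shows False
proof -
  have "y \<in> cpy R (hits F Q)" "z \<in> cpy R (hits F Q)"
    using nbrSS[OF assms(2,3,1)] assms by blast+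
  moreover have "indep (cpy R (hits F Q))" using indep_cpy[OF assms(2) Find[OF assms(3)]] .
  ultimately show False using assms(8,11) unfolding indep_def by blast
qed

lemma G_tri: "trifree NF"
  unfolding trifree_def
proof
  assume "\<exists>x\<in>NF. \<exists>y\<in>NF. \<exists>z\<in>NF. x \<noteq> y \<and> y \<noteq> z \<and> x \<noteq> z \<and> x \<inter> y \<noteq> {} \<and> y \<inter> z \<noteq> {} \<and> x \<inter> z \<noteq> {}"
  then obtain x y z where m: "x \<in> NF" "y \<in> NF" "z \<in> NF" and d: "x \<noteq> y" "y \<noteq> z" "x \<noteq> z"
    and i: "x \<inter> y \<noteq> {}" "y \<inter> z \<noteq> {}" "x \<inter> z \<noteq> {}" by blast
  have i': "y \<inter> x \<noteq> {}" "z \<inter> y \<noteq> {}" "z \<inter> x \<noteq> {}" using i by blast+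
  show False
  proof (cases "\<exists>R\<in>P0. \<exists>Q\<in>P. x \<in> SS k R Q \<or> y \<in> SS k R Q \<or> z \<in> SS k R Q")
    case True
    then obtain R Q where RQ: "R \<in> P0" "Q \<in> P" "x \<in> SS k R Q \<or> y \<in> SS k R Q \<or> z \<in> SS k R Q" by blast
    then consider "x \<in> SS k R Q" | "y \<in> SS k R Q" | "z \<in> SS k R Q" by blast
    then show False
    proof cases
      case 1 show False by (rule tri_SS[OF 1 RQ(1,2) m(2,3)]) (use d i i' in auto)
    next
      case 2 show False by (rule tri_SS[OF 2 RQ(1,2) m(1,3)]) (use d i i' in auto)
    next
      case 3 show False by (rule tri_SS[OF 3 RQ(1,2) m(1,2)]) (use d i i' in auto)
    qed
  next
    case False
    then have nS: "\<not> (\<exists>R'\<in>P0. \<exists>Q'\<in>P. y \<in> SS k R' Q')" "\<not> (\<exists>R'\<in>P0. \<exists>Q'\<in>P. z \<in> SS k R' Q')"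
      "\<not> (\<exists>R'\<in>P0. \<exists>Q'\<in>P. x \<in> SS k R' Q')" by blast+
    show False
    proof (cases "x \<in> F0")
      case True
      have "y \<in> F0" "z \<in> F0" using nbrF0[OF True] m i by blast+
      then show False using F0tri True d i unfolding trifree_def by blast
    next
      case False
      then obtain R where R: "R \<in> P0" "x \<in> cpy R F" using m(1) nS(3) NF_cases by blast
      have y: "y \<in> cpy R F" using nbrcpy[OF R m(2) i(1) nS(1)] .
      have z: "z \<in> cpy R F" using nbrcpy[OF R m(3) i(3) nS(2)] .
      obtain x0 y0 z0 where 0: "x0 \<in> F" "y0 \<in> F" "z0 \<in> F" "x = TR R ` x0" "y = TR R ` y0" "z = TR R ` z0"
        using R(2) y z unfolding cpy_def by blast
      have inj: "inj (TR R)" using TRinj[OF R(1)] .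
      have "x0 \<noteq> y0" "y0 \<noteq> z0" "x0 \<noteq> z0" using d 0 by auto
      moreover have "x0 \<inter> y0 \<noteq> {}" "y0 \<inter> z0 \<noteq> {}" "x0 \<inter> z0 \<noteq> {}"
        using i 0 image_Int[OF inj] by (metis image_empty)+
      ultimately show False using Ftri 0(1-3) unfolding trifree_def by blast
    qed
  qed
qed

end

context step begin

lemma G_I: assumes I: "I \<subseteq> NF" "indep I"
  shows "card I \<le> k * card {Z\<in>NP. hits NF Z \<inter> I \<noteq> {}}"
proof -
  have Ii: "u \<inter> v = {}" if "u \<in> I" "v \<in> I" "u \<noteq> v" for u v
    using I(2) that unfolding indep_def by auto
  define X where "X = P0 \<times> P"
  define a where "a R \<longleftrightarrow> hits F0 R \<inter> I \<noteq> {}" for R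
  define J where "J R = {t\<in>F. TR R ` t \<in> I}" for R
  define b where "b R Q \<longleftrightarrow> hits F Q \<inter> J R \<noteq> {}" for R Q
  define sig where "sig R Q \<longleftrightarrow> SS k R Q \<inter> I \<noteq> {}" for R Q
  have finX: "finite X" using fin by (simp add: X_def)
  have fNF: "finite NF" using fin fincpy finSS by (simp add: newF_def)
  have finI: "finite I" by (rule finite_subset[OF I(1) fNF])
  have c1: "card I \<le> card (I \<inter> F0) + (\<Sum>R\<in>P0. card (I \<inter> cpy R F)) + (\<Sum>x\<in>X. card (I \<inter> SS k (fst x) (snd x)))"
  proof -
    have sub: "I \<subseteq> (I \<inter> F0) \<union> (\<Union>R\<in>P0. I \<inter> cpy R F) \<union> (\<Union>x\<in>X. I \<inter> SS k (fst x) (snd x))"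
    proof
      fix s assume s: "s \<in> I"
      then have "s \<in> NF" using I(1) by blast
      then consider "s \<in> F0" | R where "R \<in> P0" "s \<in> cpy R F" | R Q where "R \<in> P0" "Q \<in> P" "s \<in> SS k R Q"
        using NF_cases by blast
      then show "s \<in> (I \<inter> F0) \<union> (\<Union>R\<in>P0. I \<inter> cpy R F) \<union> (\<Union>x\<in>X. I \<inter> SS k (fst x) (snd x))"
      proof cases
        case 1 then show ?thesis using s by blast
      next
        case 2 then show ?thesis using s by blast
      next
        case 3
        then have "(R,Q) \<in> X" "s \<in> I \<inter> SS k (fst (R,Q)) (snd (R,Q))" using s by (simp_all add: X_def)
        then show ?thesis by blast
      qed
    qed
    have fU: "finite ((I \<inter> F0) \<union> (\<Union>R\<in>P0. I \<inter> cpy R F) \<union> (\<Union>x\<in>X. I \<inter> SS k (fst x) (snd x)))"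
      by (rule finite_subset[OF _ finI]) blast
    have "card I \<le> card ((I \<inter> F0) \<union> (\<Union>R\<in>P0. I \<inter> cpy R F) \<union> (\<Union>x\<in>X. I \<inter> SS k (fst x) (snd x)))"
      by (rule card_mono[OF fU sub])
    also have "\<dots> \<le> card ((I \<inter> F0) \<union> (\<Union>R\<in>P0. I \<inter> cpy R F)) + card (\<Union>x\<in>X. I \<inter> SS k (fst x) (snd x))"
      by (rule card_Un_le)
    also have "\<dots> \<le> card (I \<inter> F0) + card (\<Union>R\<in>P0. I \<inter> cpy R F) + card (\<Union>x\<in>X. I \<inter> SS k (fst x) (snd x))"
      using card_Un_le by simp
    also have "\<dots> \<le> card (I \<inter> F0) + (\<Sum>R\<in>P0. card (I \<inter> cpy R F)) + (\<Sum>x\<in>X. card (I \<inter> SS k (fst x) (snd x)))"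
      using card_UN_le[OF fin(2), of "\<lambda>R. I \<inter> cpy R F"] card_UN_le[OF finX, of "\<lambda>x. I \<inter> SS k (fst x) (snd x)"]
      by linarith
    finally show ?thesis .
  qed
  have c2: "card (I \<inter> F0) \<le> k * card {x\<in>X. a (fst x)}"
  proof -
    have ind0: "indep (I \<inter> F0)" unfolding indep_def using Ii by simp
    have e: "{Z\<in>P0. hits F0 Z \<inter> (I \<inter> F0) \<noteq> {}} = {R\<in>P0. a R}"
      unfolding a_def hits_def by blast
    have "card (I \<inter> F0) \<le> (card P * k) * card {R\<in>P0. a R}"
      using F0I[of "I \<inter> F0"] ind0 e by simp
    moreover have "{x\<in>X. a (fst x)} = {R\<in>P0. a R} \<times> P"
    proof (rule set_eqI)
      fix x :: "probe \<times> probe"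
      obtain R Q where "x = (R,Q)" by (cases x)
      then show "x \<in> {x\<in>X. a (fst x)} \<longleftrightarrow> x \<in> {R\<in>P0. a R} \<times> P"
        unfolding X_def by auto
    qed
    moreover have "card ({R\<in>P0. a R} \<times> P) = card {R\<in>P0. a R} * card P"
      by (rule card_cartesian_product)
    ultimately show ?thesis by (simp add: algebra_simps)
  qed
  have c3: "(\<Sum>R\<in>P0. card (I \<inter> cpy R F)) \<le> k * card {x\<in>X. b (fst x) (snd x)}"
  proof -
    have per: "card (I \<inter> cpy R F) \<le> k * card {Q\<in>P. b R Q}" if R: "R \<in> P0" for R
    proof -
      have inj: "inj (TR R)" using TRinj[OF R] .
      have e: "I \<inter> cpy R F = (\<lambda>t. TR R ` t) ` J R"
      proof (rule set_eqI)
        fix s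
        show "s \<in> I \<inter> cpy R F \<longleftrightarrow> s \<in> (\<lambda>t. TR R ` t) ` J R"
        proof
          assume "s \<in> I \<inter> cpy R F"
          then obtain t where "t \<in> F" "s = TR R ` t" "s \<in> I" unfolding cpy_def by blast
          then show "s \<in> (\<lambda>t. TR R ` t) ` J R" unfolding J_def by blast
        next
          assume "s \<in> (\<lambda>t. TR R ` t) ` J R"
          then obtain t where "t \<in> F" "s = TR R ` t" "TR R ` t \<in> I" unfolding J_def by blast
          then show "s \<in> I \<inter> cpy R F" unfolding cpy_def by blast
        qed
      qed
      have ij: "inj_on (\<lambda>t. TR R ` t) (J R)"
      proof (rule inj_onI)
        fix s t assume "TR R ` s = TR R ` t"
        then show "s = t" using inj_image_eq_iff[OF inj] by metis
      qed
      have cJ: "card (I \<inter> cpy R F) = card (J R)" using e ij by (simp add: card_image)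
      have JF: "J R \<subseteq> F" unfolding J_def by blast
      have indJ: "indep (J R)" unfolding indep_def
      proof (intro ballI impI)
        fix s t assume st: "s \<in> J R" "t \<in> J R" "s \<noteq> t"
        then have "TR R ` s \<noteq> TR R ` t" by (simp add: inj_image_eq_iff[OF inj])
        moreover have "TR R ` s \<in> I" "TR R ` t \<in> I" using st(1,2) by (simp_all add: J_def)
        ultimately have "TR R ` s \<inter> TR R ` t = {}" using Ii by simp
        then have "TR R ` (s \<inter> t) = {}" using image_Int[OF inj, of s t] by simp
        then show "s \<inter> t = {}" by simp
      qed
      have "card (J R) \<le> k * card {Q\<in>P. hits F Q \<inter> J R \<noteq> {}}" using FI[OF JF indJ] .
      then show ?thesis using cJ unfolding b_def by simp
    qed
    have "(\<Sum>R\<in>P0. card (I \<inter> cpy R F)) \<le> (\<Sum>R\<in>P0. k * card {Q\<in>P. b R Q})"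
      using per by (intro sum_mono) auto
    also have "\<dots> = k * (\<Sum>R\<in>P0. card {Q\<in>P. b R Q})" by (simp add: sum_distrib_left)
    also have "(\<Sum>R\<in>P0. card {Q\<in>P. b R Q}) = card (SIGMA R:P0. {Q\<in>P. b R Q})"
      using fin by (subst card_SigmaI) auto
    also have "(SIGMA R:P0. {Q\<in>P. b R Q}) = {x\<in>X. b (fst x) (snd x)}"
    proof (rule set_eqI)
      fix x :: "probe \<times> probe"
      obtain R Q where "x = (R,Q)" by (cases x)
      then show "x \<in> (SIGMA R:P0. {Q\<in>P. b R Q}) \<longleftrightarrow> x \<in> {x\<in>X. b (fst x) (snd x)}"
        unfolding X_def by simp
    qed
    finally show ?thesis .
  qed
  have c4: "(\<Sum>x\<in>X. card (I \<inter> SS k (fst x) (snd x))) \<le> k * card {x\<in>X. sig (fst x) (snd x)}"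
  proof -
    have "(\<Sum>x\<in>X. card (I \<inter> SS k (fst x) (snd x))) \<le> (\<Sum>x\<in>X. if sig (fst x) (snd x) then k else 0)"
    proof (rule sum_mono)
      fix x assume x: "x \<in> X"
      then have x1: "fst x \<in> P0" "snd x \<in> P" unfolding X_def by (simp_all add: mem_Times_iff)
      show "card (I \<inter> SS k (fst x) (snd x)) \<le> (if sig (fst x) (snd x) then k else 0)"
      proof (cases "sig (fst x) (snd x)")
        case True
        have "card (I \<inter> SS k (fst x) (snd x)) \<le> card (SS k (fst x) (snd x))"
          by (rule card_mono[OF finSS]) blast
        then show ?thesis using True card_SS[OF x1] by simp
      next
        case False
        then have "I \<inter> SS k (fst x) (snd x) = {}" unfolding sig_def by blast
        then show ?thesis by simp
      qed
    qed
    also have "\<dots> = k * card {x\<in>X. sig (fst x) (snd x)}"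
      unfolding card_filter_sum[OF finX] sum_distrib_left by (intro sum.cong) auto
    finally show ?thesis .
  qed
  have sb: "\<forall>x\<in>X. sig (fst x) (snd x) \<longrightarrow> \<not> b (fst x) (snd x)"
  proof (intro ballI impI notI)
    fix x assume x: "x \<in> X" and sg': "sig (fst x) (snd x)" and bb: "b (fst x) (snd x)"
    then have x1: "fst x \<in> P0" "snd x \<in> P" unfolding X_def by (simp_all add: mem_Times_iff)
    obtain s where s: "s \<in> SS k (fst x) (snd x)" "s \<in> I" using sg' unfolding sig_def by blast
    then obtain j where j: "j < k" "s = sg k (fst x) (snd x) j" by (auto simp: SS_def)
    obtain t where t: "t \<in> hits F (snd x)" "TR (fst x) ` t \<in> I" using bb unfolding b_def J_def by blast
    have m: "TR (fst x) ` t \<inter> s \<noteq> {}" using meetB[OF x1 t(1) j(1)] j(2) by simp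
    have "TR (fst x) ` t \<noteq> s"
    proof
      assume "TR (fst x) ` t = s"
      moreover have "TR (fst x) ` t \<in> cpy (fst x) F" using t(1) by (auto simp: cpy_def hits_def)
      ultimately show False using E4[OF x1(1) x1(1) x1(2)] s(1) by blast
    qed
    then show False using Ii[OF t(2) s(2)] m by simp
  qed
  have c5: "card {x\<in>X. a (fst x)} + card {x\<in>X. b (fst x) (snd x)} + card {x\<in>X. sig (fst x) (snd x)}
     \<le> card {x\<in>X. a (fst x) \<or> b (fst x) (snd x)} + card {x\<in>X. a (fst x) \<or> sig (fst x) (snd x)}"
    by (rule comb3[OF finX sb])
  have c6: "card {x\<in>X. a (fst x) \<or> b (fst x) (snd x)} + card {x\<in>X. a (fst x) \<or> sig (fst x) (snd x)}
     \<le> card {Z\<in>NP. hits NF Z \<inter> I \<noteq> {}}"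
  proof -
    let ?A = "{x\<in>X. a (fst x) \<or> b (fst x) (snd x)}"
    let ?B = "{x\<in>X. a (fst x) \<or> sig (fst x) (snd x)}"
    let ?f1 = "\<lambda>x. P1 (fst x) (snd x)"
    let ?f2 = "\<lambda>x. P2 (fst x) (snd x)"
    have c1: "card (?f1 ` ?A) = card ?A" using inj1 unfolding X_def by (intro card_image) (rule inj_on_subset, auto)
    have c2: "card (?f2 ` ?B) = card ?B" using inj2 unfolding X_def by (intro card_image) (rule inj_on_subset, auto)
    have dj: "?f1 ` ?A \<inter> ?f2 ` ?B = {}"
    proof (rule equals0I)
      fix z assume "z \<in> ?f1 ` ?A \<inter> ?f2 ` ?B"
      then obtain x y where "x \<in> X" "y \<in> X" "z = P1 (fst x) (snd x)" "z = P2 (fst y) (snd y)" by blast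
      then show False using disj12 unfolding X_def by metis
    qed
    have sub: "?f1 ` ?A \<union> ?f2 ` ?B \<subseteq> {Z\<in>NP. hits NF Z \<inter> I \<noteq> {}}"
    proof
      fix z assume "z \<in> ?f1 ` ?A \<union> ?f2 ` ?B"
      then consider x where "x \<in> ?A" "z = ?f1 x" | x where "x \<in> ?B" "z = ?f2 x" by blast
      then show "z \<in> {Z\<in>NP. hits NF Z \<inter> I \<noteq> {}}"
      proof cases
        case 1
        then have x1: "fst x \<in> P0" "snd x \<in> P" unfolding X_def by (simp_all add: mem_Times_iff)
        have inNP: "z \<in> NP" using 1 x1 NP_cases by blast
        have "(hits F0 (fst x) \<union> cpy (fst x) (hits F (snd x))) \<inter> I \<noteq> {}"
          using 1(1) unfolding a_def b_def J_def cpy_def by blast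
        then show ?thesis using hitsP1[OF x1] 1(2) inNP by simp
      next
        case 2
        then have x1: "fst x \<in> P0" "snd x \<in> P" unfolding X_def by (simp_all add: mem_Times_iff)
        have inNP: "z \<in> NP" using 2 x1 NP_cases by blast
        have "(hits F0 (fst x) \<union> SS k (fst x) (snd x)) \<inter> I \<noteq> {}"
          using 2(1) unfolding a_def sig_def by blast
        then show ?thesis using hitsP2[OF x1] 2(2) inNP by simp
      qed
    qed
    have fNP: "finite {Z\<in>NP. hits NF Z \<inter> I \<noteq> {}}" using fin by (simp add: newP_def)
    have "card ?A + card ?B = card (?f1 ` ?A \<union> ?f2 ` ?B)"
      using c1 c2 dj finX by (simp add: card_Un_disjoint)
    also have "\<dots> \<le> card {Z\<in>NP. hits NF Z \<inter> I \<noteq> {}}" by (rule card_mono[OF fNP sub])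
    finally show ?thesis .
  qed
  have "card I \<le> k * card {x\<in>X. a (fst x)} + k * card {x\<in>X. b (fst x) (snd x)} + k * card {x\<in>X. sig (fst x) (snd x)}"
    using c1 c2 c3 c4 by linarith
  also have "\<dots> = k * (card {x\<in>X. a (fst x)} + card {x\<in>X. b (fst x) (snd x)} + card {x\<in>X. sig (fst x) (snd x)})"
    by (simp add: algebra_simps)
  also have "\<dots> \<le> k * card {Z\<in>NP. hits NF Z \<inter> I \<noteq> {}}"
    using c5 c6 by (intro mult_left_mono) auto
  finally show ?thesis .
qed

lemma step_good: "good NF NP k (Suc n)"
  unfolding good_def
proof (intro conjI)
  show "finite NF" using fin fincpy finSS by (simp add: newF_def)
  show "finite NP" using fin by (simp add: newP_def)
  obtain R Q where "R \<in> P0" "Q \<in> P" using fin by blast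
  then show "NP \<noteq> {}" using NP_cases by blast
  show "\<forall>s\<in>NF. \<exists>a b. a \<noteq> b \<and> s = closed_segment a b" using G_seg by blast
  show "\<forall>s\<in>NF. s \<subseteq> rbox 0 1 0 1" using G_box by blast
  show "trifree NF" by (rule G_tri)
  show "\<forall>Z\<in>NP. 0 \<le> pl Z \<and> pl Z < pm Z \<and> pm Z \<le> 1 \<and> 0 \<le> pc Z \<and> pc Z < pd Z \<and> pd Z \<le> 1" using G_par by blast
  show "\<forall>Z\<in>NP. \<forall>Z'\<in>NP. Z \<noteq> Z' \<longrightarrow> pd Z < pc Z' \<or> pd Z' < pc Z" using G_dis by blast
  show "\<forall>Z\<in>NP. \<forall>s\<in>hits NF Z. \<forall>y. pc Z \<le> y \<and> y \<le> pd Z \<longrightarrow> (\<exists>x. pm Z \<le> x \<and> x \<le> 1 \<and> (x, y) \<in> s)"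
    using G_cross by blast
  show "\<forall>Z\<in>NP. \<forall>s\<in>hits NF Z. \<forall>p\<in>s \<inter> region Z. pm Z \<le> fst p" using G_free by blast
  show "\<forall>Z\<in>NP. indep (hits NF Z)" using G_ind by blast
  show "2 * card NF = (Suc n + 2) * k * card NP" by (rule G_count)
  show "\<forall>I. I \<subseteq> NF \<longrightarrow> indep I \<longrightarrow> card I \<le> k * card {Z \<in> NP. hits NF Z \<inter> I \<noteq> {}}"
    using G_I by blast
qed

end

lemma all_levels: "0 < k \<Longrightarrow> \<exists>F P. good F P k n"
proof (induction n arbitrary: k)
  case 0
  then show ?case using base by blast
next
  case (Suc n)
  obtain F P where g: "good F P k n" using Suc by blast
  have "finite P" "P \<noteq> {}" using g by (auto simp: good_def)
  then have "0 < card P * k" using Suc(2) by (simp add: card_gt_0_iff)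
  then obtain F0 P0 where g0: "good F0 P0 (card P * k) n" using Suc.IH by blast
  interpret step F0 P0 F P k n using g0 g Suc(2) by unfold_locales
  show ?case using step_good by blast
qed


definition vec2 :: "pt \<Rightarrow> real^2" where "vec2 p = (\<chi> i. if i = 1 then fst p else snd p)"

lemma vec2_comp: "vec2 p $ 1 = fst p" "vec2 p $ 2 = snd p"
  by (simp_all add: vec2_def)

lemma vec2_linear: "linear vec2"
  by (rule linearI) (simp_all add: vec2_def vec_eq_iff)

lemma vec2_inj: "inj vec2"
proof (rule injI)
  fix p q assume "vec2 p = vec2 q"
  then have "vec2 p $ 1 = vec2 q $ 1" "vec2 p $ 2 = vec2 q $ 2" by simp_all
  then show "p = q" by (simp add: vec2_comp prod_eq_iff)
qed

theorem mainTheorem1: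
  fixes \<epsilon> :: real
  assumes "\<epsilon> > 0"
  shows "\<exists>S :: (real^2) set set. finite S \<and> S \<noteq> {} \<and> (\<forall>s\<in>S. is_segment s) \<and>
           triangle_free_ig S \<and>
           (\<forall>I. independent_ig S I \<longrightarrow> real (card I) \<le> \<epsilon> * real (card S))"
proof -
  obtain n :: nat where n: "2 / \<epsilon> \<le> real n" using real_arch_simple by blast
  obtain F P where g: "good F P 1 n" using all_levels[of 1 n] by auto
  have finF: "finite F" using g by (simp add: good_def)
  have finP: "finite P" using g by (simp add: good_def)
  have Pne: "P \<noteq> {}" using g by (simp add: good_def)
  have segF: "\<forall>s\<in>F. \<exists>a b. a \<noteq> b \<and> s = closed_segment a b" using g unfolding good_def by (elim conjE) assumption
  have triF: "trifree F" using g unfolding good_def by (elim conjE) assumption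
  have cnt: "2 * card F = (n+2) * card P" using g by (simp add: good_def)
  have indF: "\<forall>I. I \<subseteq> F \<longrightarrow> indep I \<longrightarrow> card I \<le> card {Z\<in>P. hits F Z \<inter> I \<noteq> {}}"
    using g by (simp add: good_def)
  define V where "V s = vec2 ` s" for s
  define S where "S = V ` F"
  have injV: "inj V" unfolding V_def by (rule injI) (simp add: inj_image_eq_iff[OF vec2_inj])
  have Vint: "V a \<inter> V b = V (a \<inter> b)" for a b unfolding V_def by (simp add: image_Int[OF vec2_inj])
  have Veq: "V a = V b \<longleftrightarrow> a = b" for a b using injV by (simp add: inj_eq)
  have Vne: "V a = {} \<longleftrightarrow> a = {}" for a unfolding V_def by simp
  have cardS: "card S = card F" unfolding S_def using injV by (simp add: card_image inj_on_subset)
  have cP: "0 < card P" using finP Pne by (simp add: card_gt_0_iff)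
  have "0 < card F" using cnt cP by simp
  then have Fne: "F \<noteq> {}" by auto
  have "finite S" unfolding S_def using finF by simp
  moreover have "S \<noteq> {}" unfolding S_def using Fne by simp
  moreover have "\<forall>s\<in>S. is_segment s"
  proof
    fix s assume "s \<in> S"
    then obtain t where t: "t \<in> F" "s = V t" unfolding S_def by blast
    then obtain a b where ab: "a \<noteq> b" "t = closed_segment a b" using segF by blast
    have "s = closed_segment (vec2 a) (vec2 b)"
      using t(2) ab(2) closed_segment_linear_image[OF vec2_linear, of a b] by (simp add: V_def)
    moreover have "vec2 a \<noteq> vec2 b" using ab(1) vec2_inj by (meson injD)
    ultimately show "is_segment s" unfolding is_segment_def by blast
  qed
  moreover have "triangle_free_ig S"
    unfolding triangle_free_ig_def
  proof
    assume "\<exists>x\<in>S. \<exists>y\<in>S. \<exists>z\<in>S. seg_adj x y \<and> seg_adj y z \<and> seg_adj x z"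
    then obtain x y z where m: "x \<in> F" "y \<in> F" "z \<in> F" and a: "seg_adj (V x) (V y)" "seg_adj (V y) (V z)" "seg_adj (V x) (V z)"
      unfolding S_def by blast
    have "x \<noteq> y \<and> y \<noteq> z \<and> x \<noteq> z \<and> x \<inter> y \<noteq> {} \<and> y \<inter> z \<noteq> {} \<and> x \<inter> z \<noteq> {}"
      using a unfolding seg_adj_def by (simp add: Vint Veq Vne)
    then show False using triF m unfolding trifree_def by blast
  qed
  moreover have "\<forall>I. independent_ig S I \<longrightarrow> real (card I) \<le> \<epsilon> * real (card S)"
  proof (intro allI impI)
    fix I assume "independent_ig S I"
    then have IS: "I \<subseteq> S" and na: "\<forall>x\<in>I. \<forall>y\<in>I. \<not> seg_adj x y" unfolding independent_ig_def by auto
    define I0 where "I0 = {t\<in>F. V t \<in> I}"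
    have I0F: "I0 \<subseteq> F" unfolding I0_def by blast
    have Ie: "I = V ` I0" unfolding I0_def using IS unfolding S_def by blast
    have cI: "card I = card I0" unfolding Ie using injV by (simp add: card_image inj_on_subset)
    have ind0: "indep I0" unfolding indep_def
    proof (intro ballI impI)
      fix s t assume st: "s \<in> I0" "t \<in> I0" "s \<noteq> t"
      then have "\<not> seg_adj (V s) (V t)" using na unfolding I0_def by blast
      then show "s \<inter> t = {}" using st(3) unfolding seg_adj_def by (simp add: Vint Veq Vne)
    qed
    have "card I0 \<le> card {Z\<in>P. hits F Z \<inter> I0 \<noteq> {}}" using indF I0F ind0 by blast
    also have "\<dots> \<le> card P" using finP by (simp add: card_mono)
    finally have cIP: "card I \<le> card P" using cI by simp
    have e1: "2 \<le> \<epsilon> * real n" using n assms by (simp add: field_simps)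
    have cnt': "real (card P) * (real n + 2) = 2 * real (card F)"
      using arg_cong[OF cnt, of real] by (simp add: algebra_simps)
    have "2 * real (card F) \<le> (\<epsilon> * real n) * real (card F)"
      using e1 by (intro mult_right_mono) auto
    also have "\<dots> \<le> (\<epsilon> * real (card F)) * (real n + 2)"
      using assms by (simp add: algebra_simps)
    finally have "real (card P) * (real n + 2) \<le> (\<epsilon> * real (card F)) * (real n + 2)" using cnt' by simp
    then have "real (card P) \<le> \<epsilon> * real (card F)" by (simp add: mult_le_cancel_right_pos)
    then show "real (card I) \<le> \<epsilon> * real (card S)" using cIP cardS by simp
  qed
  ultimately show ?thesis by blast
qed


end
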